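(* The functionals $(\eta,v)\mapsto\mathrm{KL}^U_{\inf}(\eta,v)$ and $(\eta,v)\mapsto\mathrm{KL}^L_{\inf}(\eta,v)$, on $\mathcal{P}(\mathbb{R})\times D$ (weak topology on $\mathcal{P}(\mathbb{R})$), are jointly lower-semicontinuous.
   Context: $\pi\in(0,1)$, $\epsilon>0$, $B>0$. $\mathcal{L}=\{\eta\in\mathcal{P}(\mathbb{R}):\mathbb{E}_\eta|X|^{1+\epsilon}\le B\}$. $F_\eta(x)=\eta((-\infty,x])$, $x_\pi(\eta)=\min\{z:F_\eta(z)\ge\pi\}$, $c_\pi(\eta)=\frac{F_\eta(x_\pi(\eta))-\pi}{1-\pi}x_\pi(\eta)+\frac{1}{1-\pi}\int_{(x_\pi(\eta),\infty)}y\,dF_\eta(y)$. $D=[-B^{1/(1+\epsilon)},B^{1/(1+\epsilon)}(1-\pi)^{-1/(1+\epsilon)}]$. $\mathrm{KL}(\eta,\kappa)=\int\log\frac{d\eta}{d\kappa}d\eta$ if $\eta\ll\kappa$, else $+\infty$. $\mathrm{KL}^U_{\inf}(\eta,x)=\inf\{\mathrm{KL}(\eta,\kappa):\kappa\in\mathcal{L},c_\pi(\kappa)\ge x\}$, $\mathrm{KL}^L_{\inf}(\eta,x)=\inf\{\mathrm{KL}(\eta,\kappa):\kappa\in\mathcal{L},c_\pi(\kappa)\le x\}$. *)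

theory Defs
  imports "HOL-Probability.Probability"
begin

definition probs_R :: "real measure set" where
  "probs_R = {M. prob_space M \<and> sets M = sets borel}"

definition moment_class :: "real \<Rightarrow> real \<Rightarrow> real measure set" where
  "moment_class eps B =
     {M \<in> probs_R. (\<integral>\<^sup>+ x. ennreal (\<bar>x\<bar> powr (1 + eps)) \<partial>M) \<le> ennreal B}"

definition cdf_R :: "real measure \<Rightarrow> real \<Rightarrow> real" where
  "cdf_R M x = measure M {..x}"

definition quantile_R :: "real \<Rightarrow> real measure \<Rightarrow> real" where
  "quantile_R p M = (LEAST z. cdf_R M z \<ge> p)"

definition cvar :: "real \<Rightarrow> real measure \<Rightarrow> real" where
  "cvar p M =
     (let q = quantile_R p M in
        (cdf_R M q - p) / (1 - p) * q + 1 / (1 - p) * (LINT y:{q<..}|M. y))"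

definition dom_D :: "real \<Rightarrow> real \<Rightarrow> real \<Rightarrow> real set" where
  "dom_D p eps B = {- (B powr (1 / (1 + eps))) .. B powr (1 / (1 + eps)) * (1 - p) powr (- 1 / (1 + eps))}"

text \<open>When eta << kappa the negative part of the log-density is eta-integrable, so the
  integral is +infinity exactly when the log-density is not eta-integrable.\<close>
definition KL :: "real measure \<Rightarrow> real measure \<Rightarrow> ereal" where
  "KL \<eta> \<kappa> =
     (if absolutely_continuous \<kappa> \<eta> \<and> integrable \<eta> (\<lambda>x. ln (enn2real (RN_deriv \<kappa> \<eta> x)))
      then ereal (\<integral>x. ln (enn2real (RN_deriv \<kappa> \<eta> x)) \<partial>\<eta>)
      else \<infinity>)"

definition KL_inf_U :: "real \<Rightarrow> real \<Rightarrow> real \<Rightarrow> real measure \<Rightarrow> real \<Rightarrow> ereal" where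
  "KL_inf_U p eps B \<eta> x = Inf {KL \<eta> \<kappa> | \<kappa>. \<kappa> \<in> moment_class eps B \<and> cvar p \<kappa> \<ge> x}"

definition KL_inf_L :: "real \<Rightarrow> real \<Rightarrow> real \<Rightarrow> real measure \<Rightarrow> real \<Rightarrow> ereal" where
  "KL_inf_L p eps B \<eta> x = Inf {KL \<eta> \<kappa> | \<kappa>. \<kappa> \<in> moment_class eps B \<and> cvar p \<kappa> \<le> x}"

end

theory Submission
  imports Defs
begin

lemma probs_R_iff: "M \<in> probs_R \<longleftrightarrow> real_distribution M"
  unfolding probs_R_def real_distribution_def real_distribution_axioms_def by auto

lemma rd_meas: "real_distribution \<kappa> \<Longrightarrow> f \<in> borel_measurable borel \<Longrightarrow> f \<in> borel_measurable \<kappa>"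
  using measurable_cong_sets[OF real_distribution.events_eq_borel refl, of \<kappa> borel] by auto

lemma abs_le_powr: "eps > 0 \<Longrightarrow> \<bar>x::real\<bar> \<le> 1 + \<bar>x\<bar> powr (1 + eps)"
proof (cases "\<bar>x\<bar> \<le> 1")
  case True then show ?thesis using powr_ge_zero[of "\<bar>x\<bar>" "1+eps"] by linarith
next
  case False
  assume e: "eps > 0"
  have "\<bar>x\<bar> = \<bar>x\<bar> powr 1" using False by simp
  also have "\<dots> \<le> \<bar>x\<bar> powr (1 + eps)" using False e by (intro powr_mono) auto
  finally show ?thesis by simp
qed

lemma isCont_abs_powr: "eps > 0 \<Longrightarrow> isCont (\<lambda>x::real. \<bar>x\<bar> powr (1 + eps)) x"
proof -
  assume e: "eps > 0"
  have "continuous_on UNIV (\<lambda>x::real. \<bar>x\<bar> powr (1 + eps))"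
    using e by (intro continuous_on_powr') (auto intro: continuous_intros)
  thus ?thesis by (simp add: continuous_on_eq_continuous_at)
qed

lemma mc_basic:
  assumes "\<kappa> \<in> moment_class eps B" "eps > 0" "B > 0"
  shows "real_distribution \<kappa>" "integrable \<kappa> (\<lambda>x. \<bar>x\<bar> powr (1+eps))"
    "(\<integral>x. \<bar>x\<bar> powr (1+eps) \<partial>\<kappa>) \<le> B" "integrable \<kappa> (\<lambda>x. x)"
proof -
  show rd: "real_distribution \<kappa>" using assms by (auto simp: moment_class_def probs_R_iff)
  then interpret real_distribution \<kappa> .
  have nn: "(\<integral>\<^sup>+ x. ennreal (\<bar>x\<bar> powr (1 + eps)) \<partial>\<kappa>) \<le> ennreal B"
    using assms by (auto simp: moment_class_def)
  show int: "integrable \<kappa> (\<lambda>x. \<bar>x\<bar> powr (1+eps))"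
    apply (rule integrableI_bounded[OF rd_meas[OF rd]])
    using isCont_abs_powr[OF assms(2)]
     apply (intro borel_measurable_continuous_onI continuous_at_imp_continuous_on, blast)
    using nn by (simp add: le_less_trans[OF _ ennreal_less_top])
  have "ennreal (\<integral>x. \<bar>x\<bar> powr (1+eps) \<partial>\<kappa>) \<le> ennreal B"
    using nn nn_integral_eq_integral[OF int] by auto
  moreover have "(\<integral>x. \<bar>x\<bar> powr (1+eps) \<partial>\<kappa>) \<ge> 0" by simp
  ultimately show "(\<integral>x. \<bar>x\<bar> powr (1+eps) \<partial>\<kappa>) \<le> B"
    using assms(3) ennreal_le_iff[of B] by simp
  show "integrable \<kappa> (\<lambda>x. x)"
    apply (rule Bochner_Integration.integrable_bound[where f="\<lambda>x. 1 + \<bar>x\<bar> powr (1+eps)"])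
    using int abs_le_powr[OF assms(2)] by (auto intro!: rd_meas[OF rd])
qed

lemma tight_L:
  assumes "eps > 0" "B > 0" "\<And>n. \<kappa>s n \<in> moment_class eps B"
  shows "tight \<kappa>s"
  unfolding tight_def
proof (intro conjI allI impI)
  fix n show "real_distribution (\<kappa>s n)" using mc_basic[OF assms(3) assms(1) assms(2)] by blast
next
  fix e :: real assume e: "e > 0"
  define t where "t = max 1 (2 * B / e)"
  have t: "t \<ge> 1" "t \<ge> 2 * B / e" unfolding t_def by auto
  have "\<forall>n. measure (\<kappa>s n) {-t<..t} > 1 - e"
  proof
    fix n
    note mb = mc_basic[OF assms(3)[of n] assms(1) assms(2)]
    interpret real_distribution "\<kappa>s n" by (rule mb(1))
    have "prob {x. t \<le> \<bar>x\<bar> powr (1+eps)} \<le> (\<integral>x. \<bar>x\<bar> powr (1+eps) \<partial>\<kappa>s n) / t"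
      using integral_Markov_inequality_measure[OF mb(2), of UNIV t] t by auto
    also have "\<dots> \<le> B / t" using mb(3) t by (intro divide_right_mono) auto
    also have "\<dots> < e"
    proof -
      have "B / t \<le> B / (2 * B / e)" using t assms(2) e by (intro divide_left_mono) auto
      also have "\<dots> = e / 2" using assms(2) by simp
      finally have "B / t \<le> e / 2" .
      thus ?thesis using e by linarith
    qed
    finally have p1: "prob {x. t \<le> \<bar>x\<bar> powr (1+eps)} < e" .
    have sub: "UNIV - {-t<..t} \<subseteq> {x. t \<le> \<bar>x\<bar> powr (1+eps)}"
    proof
      fix x assume "x \<in> UNIV - {-t<..t}"
      hence "t \<le> \<bar>x\<bar>" by auto
      also have "\<bar>x\<bar> = \<bar>x\<bar> powr 1" using t \<open>t \<le> \<bar>x\<bar>\<close> by simp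
      also have "\<dots> \<le> \<bar>x\<bar> powr (1+eps)" using t \<open>t \<le> \<bar>x\<bar>\<close> assms(1) by (intro powr_mono) auto
      finally show "x \<in> {x. t \<le> \<bar>x\<bar> powr (1+eps)}" by simp
    qed
    have "prob (UNIV - {-t<..t}) \<le> prob {x. t \<le> \<bar>x\<bar> powr (1+eps)}"
      using sub by (intro finite_measure_mono) auto
    moreover have "prob (UNIV - {-t<..t}) = 1 - prob {-t<..t}"
      using prob_compl[of "{-t<..t}"] by (simp add: Compl_eq_Diff_UNIV)
    ultimately show "measure (\<kappa>s n) {-t<..t} > 1 - e" using p1 by simp
  qed
  moreover have "-t < t" using t by simp
  ultimately show "\<exists>a b. a < b \<and> (\<forall>n. 1 - e < measure (\<kappa>s n) {a<..b})" by blast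
qed

lemma moment_closed:
  assumes "eps > 0" "B > 0" "\<And>n. \<kappa>s n \<in> moment_class eps B" "real_distribution \<kappa>"
    "weak_conv_m \<kappa>s \<kappa>"
  shows "\<kappa> \<in> moment_class eps B"
proof -
  interpret K: real_distribution \<kappa> by fact
  define g where "g = (\<lambda>(K::real) (x::real). min (\<bar>x\<bar> powr (1 + eps)) K)"
  have gc: "isCont (g K) x" for K x
    unfolding g_def by (intro continuous_min isCont_abs_powr[OF assms(1)] continuous_const)
  have gle: "(\<integral>x. g K x \<partial>\<kappa>) \<le> B" if K: "K \<ge> 0" for K
  proof -
    have bd: "norm (g K x) \<le> K" for x using K unfolding g_def by auto
    have lim: "(\<lambda>n. \<integral>x. g K x \<partial>\<kappa>s n) \<longlonglongrightarrow> (\<integral>x. g K x \<partial>\<kappa>)"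
      apply (rule weak_conv_imp_integral_bdd_continuous_conv[where B=K])
      using mc_basic(1)[OF assms(3) assms(1) assms(2)] assms(4,5) gc bd by auto
    have "(\<integral>x. g K x \<partial>\<kappa>s n) \<le> B" for n
    proof -
      note mb = mc_basic[OF assms(3)[of n] assms(1) assms(2)]
      interpret real_distribution "\<kappa>s n" by (rule mb(1))
      have "(\<integral>x. g K x \<partial>\<kappa>s n) \<le> (\<integral>x. \<bar>x\<bar> powr (1+eps) \<partial>\<kappa>s n)"
        apply (rule integral_mono[OF _ mb(2)])
         apply (rule finite_measure.integrable_const_bound[where B=K])
        using bd unfolding g_def by (auto intro!: borel_measurable_continuous_onI continuous_at_imp_continuous_on gc[unfolded g_def])
      thus ?thesis using mb(3) by simp
    qed
    thus ?thesis using lim by (intro LIMSEQ_le_const2) auto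
  qed
  have meas: "(\<lambda>x. \<bar>x\<bar> powr (1 + eps)) \<in> borel_measurable borel"
    by (intro borel_measurable_continuous_onI continuous_at_imp_continuous_on) (auto intro: isCont_abs_powr[OF assms(1)])
  have gm: "g K \<in> borel_measurable borel" for K
    by (intro borel_measurable_continuous_onI continuous_at_imp_continuous_on) (auto intro: gc)
  have lim2: "(\<lambda>n. \<integral>\<^sup>+x. ennreal (g (real n) x) \<partial>\<kappa>) \<longlonglongrightarrow> (\<integral>\<^sup>+x. ennreal (\<bar>x\<bar> powr (1 + eps)) \<partial>\<kappa>)"
  proof (rule nn_integral_LIMSEQ)
    show "incseq (\<lambda>n x. ennreal (g (real n) x))"
      unfolding incseq_def le_fun_def g_def by (auto intro!: ennreal_leI)
    show "(\<lambda>x. ennreal (g (real i) x)) \<in> borel_measurable \<kappa>" for i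
      using gm K.events_eq_borel measurable_cong_sets by (auto simp: K.borel_UNIV)
    fix x
    show "(\<lambda>i. ennreal (g (real i) x)) \<longlonglongrightarrow> ennreal (\<bar>x\<bar> powr (1 + eps))"
    proof (rule tendsto_eventually)
      obtain N :: nat where "\<bar>x\<bar> powr (1 + eps) \<le> real N" using real_arch_simple by blast
      hence "\<forall>n\<ge>N. ennreal (g (real n) x) = ennreal (\<bar>x\<bar> powr (1 + eps))"
        unfolding g_def by auto
      thus "\<forall>\<^sub>F i in sequentially. ennreal (g (real i) x) = ennreal (\<bar>x\<bar> powr (1 + eps))"
        unfolding eventually_sequentially by blast
    qed
  qed
  have "(\<integral>\<^sup>+x. ennreal (g (real n) x) \<partial>\<kappa>) \<le> ennreal B" for n
  proof -
    have int: "integrable \<kappa> (g (real n))"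
      apply (rule finite_measure.integrable_const_bound[where B="real n"])
      using gm unfolding g_def by (auto simp: K.borel_UNIV measurable_cong_sets[OF K.events_eq_borel])
    have "(\<integral>\<^sup>+x. ennreal (g (real n) x) \<partial>\<kappa>) = ennreal (\<integral>x. g (real n) x \<partial>\<kappa>)"
      by (rule nn_integral_eq_integral[OF int]) (auto simp: g_def)
    also have "\<dots> \<le> ennreal B" using gle[of "real n"] by (intro ennreal_leI) auto
    finally show ?thesis .
  qed
  hence "(\<integral>\<^sup>+x. ennreal (\<bar>x\<bar> powr (1 + eps)) \<partial>\<kappa>) \<le> ennreal B"
    using lim2 by (intro LIMSEQ_le_const2) auto
  thus ?thesis unfolding moment_class_def using assms(4) by (auto simp: probs_R_iff)
qed


lemma cdf_R_eq: "cdf_R M = cdf M"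
  by (simp add: cdf_R_def cdf_def fun_eq_iff)

lemma quantile_props:
  assumes rd: "real_distribution \<kappa>" and p: "0 < p" "p < 1"
  shows "p \<le> cdf_R \<kappa> (quantile_R p \<kappa>)" "\<And>z. z < quantile_R p \<kappa> \<Longrightarrow> cdf_R \<kappa> z < p"
    "measure \<kappa> {..<quantile_R p \<kappa>} \<le> p"
proof -
  interpret real_distribution \<kappa> by fact
  define S where "S = {z. p \<le> cdf \<kappa> z}"
  have "\<forall>\<^sub>F z in at_top. p < cdf \<kappa> z"
    using order_tendstoD(1)[OF cdf_lim_at_top_prob p(2)] .
  then obtain N where N: "\<And>z. z \<ge> N \<Longrightarrow> p < cdf \<kappa> z" unfolding eventually_at_top_linorder by blast
  have "\<forall>\<^sub>F z in at_bot. cdf \<kappa> z < p"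
    using order_tendstoD(2)[OF cdf_lim_at_bot p(1)] .
  then obtain b where b: "\<And>z. z \<le> b \<Longrightarrow> cdf \<kappa> z < p" unfolding eventually_at_bot_linorder by blast
  have "N \<in> S" using N[of N] by (simp add: S_def)
  hence Sne: "S \<noteq> {}" by auto
  have Sbd: "bdd_below S"
    unfolding bdd_below_def S_def
  proof (intro exI[of _ b] ballI)
    fix x assume x: "x \<in> {z. p \<le> cdf \<kappa> z}"
    show "b \<le> x"
    proof (rule ccontr)
      assume "\<not> b \<le> x"
      hence "x \<le> b" by simp
      thus False using b[of x] x by simp
    qed
  qed
  define q0 where "q0 = Inf S"
  have lower: "q0 \<le> y" if "p \<le> cdf \<kappa> y" for y
    unfolding q0_def using that Sbd by (intro cInf_lower) (auto simp: S_def)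
  have rc: "(cdf \<kappa> \<longlongrightarrow> cdf \<kappa> q0) (at_right q0)"
    using cdf_is_right_cont[of q0] by (simp add: continuous_within)
  have ev: "\<forall>\<^sub>F z in at_right q0. p \<le> cdf \<kappa> z"
    using eventually_at_right_less[of q0]
  proof (rule eventually_mono)
    fix z assume "q0 < z"
    then obtain s where "s \<in> S" "s < z" using Sne Sbd unfolding q0_def by (auto simp: cInf_less_iff)
    thus "p \<le> cdf \<kappa> z" unfolding S_def using cdf_nondecreasing[of s z] by auto
  qed
  have pq0: "p \<le> cdf \<kappa> q0"
    by (rule tendsto_lowerbound[OF rc ev trivial_limit_at_right_real])
  have qe: "quantile_R p \<kappa> = q0"
    unfolding quantile_R_def cdf_R_eq
    by (rule Least_equality) (use pq0 lower in auto)
  show "p \<le> cdf_R \<kappa> (quantile_R p \<kappa>)" using pq0 qe cdf_R_eq by simp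
  show lt: "\<And>z. z < quantile_R p \<kappa> \<Longrightarrow> cdf_R \<kappa> z < p"
    using lower qe cdf_R_eq by (metis not_le)
  have "\<forall>\<^sub>F z in at_left q0. cdf \<kappa> z \<le> p"
    using eventually_at_left_real[of "q0 - 1" q0]
    by (rule eventually_mono) (use lt qe cdf_R_eq in \<open>auto intro: less_imp_le\<close>)
  from tendsto_upperbound[OF cdf_at_left this trivial_limit_at_left_real]
  show "measure \<kappa> {..<quantile_R p \<kappa>} \<le> p" using qe by simp
qed

lemma alg_cvar: "(c::real) \<noteq> 0 \<Longrightarrow> (F - (1 - c)) / c * q + 1 / c * I = q + (I - q * (1 - F)) / c"
  by (simp add: field_simps)

lemma div_shift: "(c::real) > 0 \<Longrightarrow> A + d * c \<le> C \<Longrightarrow> A / c + d \<le> C / c"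
proof -
  assume c: "c > 0" and h: "A + d * c \<le> C"
  have "A / c + d = (A + d * c) / c" using c by (simp add: field_simps)
  also have "\<dots> \<le> C / c" using h c by (intro divide_right_mono) auto
  finally show ?thesis .
qed

definition phi :: "real \<Rightarrow> real measure \<Rightarrow> real \<Rightarrow> real" where
  "phi p \<kappa> z = z + (\<integral>x. max 0 (x - z) \<partial>\<kappa>) / (1 - p)"

lemma integrable_hinge:
  assumes "real_distribution \<kappa>" "integrable \<kappa> (\<lambda>x. x)"
  shows "integrable \<kappa> (\<lambda>x. max 0 (x - z))"
proof -
  interpret real_distribution \<kappa> by fact
  show ?thesis using assms(2) by (intro integrable_max integrable_diff) auto
qed

lemma cvar_phi:
  assumes rd: "real_distribution \<kappa>" and int: "integrable \<kappa> (\<lambda>x. x)" and p: "0 < p" "p < 1"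
  shows "cvar p \<kappa> = phi p \<kappa> (quantile_R p \<kappa>)"
proof -
  interpret real_distribution \<kappa> by fact
  define q where "q = quantile_R p \<kappa>"
  define I where "I = (LINT y:{q<..}|\<kappa>. y)"
  have m: "{q<..} \<in> sets \<kappa>" by simp
  have i1: "integrable \<kappa> (\<lambda>x. indicator {q<..} x * x)"
    using integrable_mult_indicator[OF m int] by simp
  have i2: "integrable \<kappa> (\<lambda>x. q * indicator {q<..} x)"
    by (intro integrable_mult_right) (simp add: integrable_indicator_iff less_top[symmetric] emeasure_finite)
  have eq: "(\<lambda>x. max 0 (x - q)) = (\<lambda>x. indicator {q<..} x * x - q * indicator {q<..} x)"
    by (auto simp: fun_eq_iff indicator_def)
  have "(\<integral>x. max 0 (x - q) \<partial>\<kappa>) = I - q * measure \<kappa> {q<..}"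
    unfolding eq I_def set_lebesgue_integral_def
    using i1 i2 by (simp add: Bochner_Integration.integral_diff)
  also have "measure \<kappa> {q<..} = 1 - cdf_R \<kappa> q"
    using prob_compl[of "{..q}"] by (simp add: cdf_R_def Compl_eq_Diff_UNIV[symmetric])
  finally have h: "(\<integral>x. max 0 (x - q) \<partial>\<kappa>) = I - q * (1 - cdf_R \<kappa> q)" .
  have "cvar p \<kappa> = (cdf_R \<kappa> q - p) / (1 - p) * q + 1 / (1 - p) * I"
    by (simp add: cvar_def q_def I_def Let_def)
  also have "\<dots> = q + (I - q * (1 - cdf_R \<kappa> q)) / (1 - p)"
    using alg_cvar[of "1 - p" "cdf_R \<kappa> q" q I] p by simp
  also have "\<dots> = phi p \<kappa> q" unfolding phi_def h ..
  finally show ?thesis unfolding q_def .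
qed

lemma phi_min:
  assumes rd: "real_distribution \<kappa>" and int: "integrable \<kappa> (\<lambda>x. x)" and p: "0 < p" "p < 1"
  shows "phi p \<kappa> (quantile_R p \<kappa>) \<le> phi p \<kappa> z"
proof -
  interpret real_distribution \<kappa> by fact
  define q where "q = quantile_R p \<kappa>"
  note qp = quantile_props[OF rd p, folded q_def]
  have iz: "integrable \<kappa> (\<lambda>x. max 0 (x - z))" and iq: "integrable \<kappa> (\<lambda>x. max 0 (x - q))"
    using integrable_hinge[OF rd int] by auto
  show ?thesis
  proof (cases "z < q")
    case True
    have ii: "integrable \<kappa> (\<lambda>x. (q - z) * indicator {q..} x)"
      by (intro integrable_mult_right) (simp add: integrable_indicator_iff less_top[symmetric] emeasure_finite)
    have "(\<integral>x. max 0 (x - q) + (q - z) * indicator {q..} x \<partial>\<kappa>) \<le> (\<integral>x. max 0 (x - z) \<partial>\<kappa>)"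
      by (rule integral_mono[OF Bochner_Integration.integrable_add[OF iq ii] iz]) (use True in \<open>auto simp: indicator_def\<close>)
    moreover have m: "measure \<kappa> {q..} = 1 - measure \<kappa> {..<q}"
      using prob_compl[of "{..<q}"] by (simp add: Compl_eq_Diff_UNIV[symmetric])
    moreover have "(\<integral>x. max 0 (x - q) + (q - z) * indicator {q..} x \<partial>\<kappa>) = (\<integral>x. max 0 (x - q) \<partial>\<kappa>) + (q - z) * (1 - measure \<kappa> {..<q})"
      using iq ii m by (simp add: Bochner_Integration.integral_add)
    moreover have "(q - z) * (1 - p) \<le> (q - z) * (1 - measure \<kappa> {..<q})"
      using qp(3) True by (intro mult_left_mono) auto
    ultimately have "(\<integral>x. max 0 (x - q) \<partial>\<kappa>) + (q - z) * (1 - p) \<le> (\<integral>x. max 0 (x - z) \<partial>\<kappa>)"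
      by linarith
    hence "(\<integral>x. max 0 (x - q) \<partial>\<kappa>) / (1 - p) + (q - z) \<le> (\<integral>x. max 0 (x - z) \<partial>\<kappa>) / (1 - p)"
      using p by (intro div_shift) auto
    thus ?thesis unfolding phi_def q_def by linarith
  next
    case False
    have ii: "integrable \<kappa> (\<lambda>x. (z - q) * indicator {q<..} x)"
      by (intro integrable_mult_right) (simp add: integrable_indicator_iff less_top[symmetric] emeasure_finite)
    have "(\<integral>x. max 0 (x - q) - (z - q) * indicator {q<..} x \<partial>\<kappa>) \<le> (\<integral>x. max 0 (x - z) \<partial>\<kappa>)"
      by (rule integral_mono[OF Bochner_Integration.integrable_diff[OF iq ii] iz]) (use False in \<open>auto simp: indicator_def\<close>)
    moreover have m: "measure \<kappa> {q<..} = 1 - cdf_R \<kappa> q"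
      using prob_compl[of "{..q}"] by (simp add: cdf_R_def Compl_eq_Diff_UNIV[symmetric])
    moreover have "(\<integral>x. max 0 (x - q) - (z - q) * indicator {q<..} x \<partial>\<kappa>) = (\<integral>x. max 0 (x - q) \<partial>\<kappa>) - (z - q) * (1 - cdf_R \<kappa> q)"
      using iq ii m by (simp add: Bochner_Integration.integral_diff)
    moreover have "(z - q) * (1 - cdf_R \<kappa> q) \<le> (z - q) * (1 - p)"
      using qp(1) False by (intro mult_left_mono) auto
    ultimately have "(\<integral>x. max 0 (x - q) \<partial>\<kappa>) - (z - q) * (1 - p) \<le> (\<integral>x. max 0 (x - z) \<partial>\<kappa>)"
      by linarith
    moreover have "(q - z) * (1 - p) = - ((z - q) * (1 - p))" by (simp add: algebra_simps)
    ultimately have "(\<integral>x. max 0 (x - q) \<partial>\<kappa>) / (1 - p) + (- (z - q)) \<le> (\<integral>x. max 0 (x - z) \<partial>\<kappa>) / (1 - p)"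
      using p by (intro div_shift) auto
    thus ?thesis unfolding phi_def q_def by linarith
  qed
qed

lemma phi_lip:
  assumes rd: "real_distribution \<kappa>" and int: "integrable \<kappa> (\<lambda>x. x)" and p: "0 < p" "p < 1"
  shows "phi p \<kappa> z \<le> phi p \<kappa> w + (1 + 1 / (1 - p)) * \<bar>z - w\<bar>"
proof -
  interpret real_distribution \<kappa> by fact
  have iz: "integrable \<kappa> (\<lambda>x. max 0 (x - z))" and iw: "integrable \<kappa> (\<lambda>x. max 0 (x - w))"
    using integrable_hinge[OF rd int] by auto
  have "(\<integral>x. max 0 (x - z) \<partial>\<kappa>) \<le> (\<integral>x. max 0 (x - w) + \<bar>z - w\<bar> \<partial>\<kappa>)"
    by (rule integral_mono[OF iz]) (use iw in auto)
  also have "\<dots> = (\<integral>x. max 0 (x - w) \<partial>\<kappa>) + \<bar>z - w\<bar>" using iw prob_space by simp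
  finally have "(\<integral>x. max 0 (x - z) \<partial>\<kappa>) / (1 - p) \<le> (\<integral>x. max 0 (x - w) \<partial>\<kappa>) / (1 - p) + \<bar>z - w\<bar> / (1 - p)"
    using p by (simp add: divide_right_mono add_divide_distrib[symmetric])
  moreover have "z \<le> w + \<bar>z - w\<bar>" by simp
  ultimately show ?thesis unfolding phi_def by (simp add: algebra_simps)
qed

lemma markov_L:
  assumes "\<kappa> \<in> moment_class eps B" "eps > 0" "B > 0" "t \<ge> 1"
  shows "measure \<kappa> {x. t \<le> \<bar>x\<bar>} \<le> B / t"
proof -
  note mb = mc_basic[OF assms(1-3)]
  interpret real_distribution \<kappa> by (rule mb(1))
  have "prob {x. t \<le> \<bar>x\<bar> powr (1+eps)} \<le> (\<integral>x. \<bar>x\<bar> powr (1+eps) \<partial>\<kappa>) / t"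
    using integral_Markov_inequality_measure[OF mb(2), of UNIV t] assms(4) by auto
  also have "\<dots> \<le> B / t" using mb(3) assms(4) by (intro divide_right_mono) auto
  finally have p1: "prob {x. t \<le> \<bar>x\<bar> powr (1+eps)} \<le> B / t" .
  have sub: "{x. t \<le> \<bar>x\<bar>} \<subseteq> {x. t \<le> \<bar>x\<bar> powr (1+eps)}"
  proof
    fix x assume "x \<in> {x. t \<le> \<bar>x\<bar>}"
    hence tx: "t \<le> \<bar>x\<bar>" by auto
    also have "\<bar>x\<bar> = \<bar>x\<bar> powr 1" using assms(4) tx by simp
    also have "\<dots> \<le> \<bar>x\<bar> powr (1+eps)" using assms(4) tx assms(2) by (intro powr_mono) auto
    finally show "x \<in> {x. t \<le> \<bar>x\<bar> powr (1+eps)}" by simp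
  qed
  have "prob {x. t \<le> \<bar>x\<bar>} \<le> prob {x. t \<le> \<bar>x\<bar> powr (1+eps)}"
    using sub by (intro finite_measure_mono) auto
  thus ?thesis using p1 by simp
qed

lemma quantile_bound:
  assumes "\<kappa> \<in> moment_class eps B" "eps > 0" "B > 0" "0 < p" "p < 1"
  shows "\<bar>quantile_R p \<kappa>\<bar> \<le> max 1 (B / p + B / (1 - p)) + 1"
proof -
  note mb = mc_basic[OF assms(1-3)]
  interpret real_distribution \<kappa> by (rule mb(1))
  define t where "t = max 1 (B / p + B / (1 - p)) + 1"
  have t1: "t \<ge> 1" unfolding t_def by simp
  have b1: "B / p > 0" "B / (1 - p) > 0" using assms by auto
  have b2: "B / p + B / (1 - p) \<le> max 1 (B / p + B / (1 - p))" by simp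
  have tp: "t > B / p" "t > B / (1 - p)" using b1 b2 unfolding t_def by linarith+
  define q where "q = quantile_R p \<kappa>"
  note qp = quantile_props[OF mb(1) assms(4,5), folded q_def]
  note mk = markov_L[OF assms(1-3) t1]
  have "q \<ge> -t"
  proof (rule ccontr)
    assume "\<not> q \<ge> -t"
    hence "cdf_R \<kappa> q \<le> cdf_R \<kappa> (-t)" unfolding cdf_R_eq by (intro cdf_nondecreasing) auto
    moreover have "cdf_R \<kappa> (-t) \<le> measure \<kappa> {x. t \<le> \<bar>x\<bar>}"
      unfolding cdf_R_def by (intro finite_measure_mono) auto
    ultimately have "p \<le> B / t" using qp(1) mk by linarith
    hence "p * t \<le> B" using t1 by (simp add: field_simps)
    moreover have "B < p * t" using tp(1) assms(4) by (simp add: field_simps)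
    ultimately show False by simp
  qed
  moreover have "q \<le> t"
  proof (rule ccontr)
    assume "\<not> q \<le> t"
    hence c: "cdf_R \<kappa> t < p" using qp(2) by simp
    have "measure \<kappa> {t<..} = 1 - cdf_R \<kappa> t"
      using prob_compl[of "{..t}"] by (simp add: cdf_R_def Compl_eq_Diff_UNIV[symmetric])
    moreover have "measure \<kappa> {t<..} \<le> measure \<kappa> {x. t \<le> \<bar>x\<bar>}"
      by (intro finite_measure_mono) auto
    ultimately have "1 - p < B / t" using c mk by linarith
    hence "(1 - p) * t < B" using t1 by (simp add: field_simps)
    moreover have "B < (1 - p) * t" using tp(2) assms(5) by (simp add: field_simps)
    ultimately show False by simp
  qed
  ultimately show ?thesis unfolding t_def q_def by simp
qed


lemma weak_conv_m_subseq:
  assumes "weak_conv_m Ms M" "strict_mono r"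
  shows "weak_conv_m (Ms \<circ> r) M"
  using assms unfolding weak_conv_m_def weak_conv_def
  by (auto intro: LIMSEQ_subseq_LIMSEQ[unfolded comp_def])

lemma hinge_tail_pt:
  fixes x z K eps :: real
  assumes "K > 0" "2 * \<bar>z\<bar> \<le> K" "eps > 0"
  shows "max 0 (x - z) - min (max 0 (x - z)) K \<le> 2 * (2 / K) powr eps * \<bar>x\<bar> powr (1 + eps)"
proof (cases "max 0 (x - z) \<le> K")
  case True
  thus ?thesis by simp
next
  case False
  hence h: "x - z > K" using assms(1) by (auto simp: max_def split: if_splits)
  have xpos: "x > K / 2" using h assms by linarith
  hence ax: "\<bar>x\<bar> = x" "x > 0" using assms by auto
  have lhs: "max 0 (x - z) - min (max 0 (x - z)) K \<le> 2 * x" using False h xpos assms by auto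
  have ge1: "1 \<le> (2 * x / K) powr eps"
    using xpos assms by (intro ge_one_powr_ge_zero) (auto simp: field_simps)
  have "2 * x \<le> 2 * x * (2 * x / K) powr eps" using ge1 ax by simp
  also have "(2 * x / K) powr eps = (2 / K) powr eps * x powr eps"
    using ax assms by (simp add: powr_mult[symmetric])
  also have "2 * x * ((2 / K) powr eps * x powr eps) = 2 * (2 / K) powr eps * (x powr 1 * x powr eps)"
    using ax by simp
  also have "x powr 1 * x powr eps = x powr (1 + eps)" by (simp add: powr_add)
  finally show ?thesis using lhs ax by simp
qed

lemma hinge_tail:
  assumes "\<mu> \<in> moment_class eps B" "eps > 0" "B > 0" "K > 0" "2 * \<bar>z\<bar> \<le> K"
  shows "0 \<le> (\<integral>x. max 0 (x - z) \<partial>\<mu>) - (\<integral>x. min (max 0 (x - z)) K \<partial>\<mu>)"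
    "(\<integral>x. max 0 (x - z) \<partial>\<mu>) - (\<integral>x. min (max 0 (x - z)) K \<partial>\<mu>) \<le> 2 * B * (2 / K) powr eps"
proof -
  note mb = mc_basic[OF assms(1-3)]
  interpret real_distribution \<mu> by (rule mb(1))
  have ih: "integrable \<mu> (\<lambda>x. max 0 (x - z))" using integrable_hinge[OF mb(1) mb(4)] .
  have ik: "integrable \<mu> (\<lambda>x. min (max 0 (x - z)) K)"
    apply (rule finite_measure.integrable_const_bound[where B=K])
    using assms(4) by (auto intro!: rd_meas[OF mb(1)])
  have ip: "integrable \<mu> (\<lambda>x. 2 * (2 / K) powr eps * \<bar>x\<bar> powr (1 + eps))"
    using mb(2) by simp
  show "0 \<le> (\<integral>x. max 0 (x - z) \<partial>\<mu>) - (\<integral>x. min (max 0 (x - z)) K \<partial>\<mu>)"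
    using integral_mono[OF ik ih] by simp
  have "(\<integral>x. max 0 (x - z) \<partial>\<mu>) - (\<integral>x. min (max 0 (x - z)) K \<partial>\<mu>)
      = (\<integral>x. max 0 (x - z) - min (max 0 (x - z)) K \<partial>\<mu>)"
    using ih ik by (simp add: Bochner_Integration.integral_diff)
  also have "\<dots> \<le> (\<integral>x. 2 * (2 / K) powr eps * \<bar>x\<bar> powr (1 + eps) \<partial>\<mu>)"
    by (rule integral_mono[OF Bochner_Integration.integrable_diff[OF ih ik] ip])
       (use hinge_tail_pt[OF assms(4,5,2)] in auto)
  also have "\<dots> = 2 * (2 / K) powr eps * (\<integral>x. \<bar>x\<bar> powr (1 + eps) \<partial>\<mu>)" by simp
  also have "\<dots> \<le> 2 * (2 / K) powr eps * B" using mb(3) by (intro mult_left_mono) auto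
  finally show "(\<integral>x. max 0 (x - z) \<partial>\<mu>) - (\<integral>x. min (max 0 (x - z)) K \<partial>\<mu>) \<le> 2 * B * (2 / K) powr eps"
    by (simp add: algebra_simps)
qed

lemma hinge_conv:
  assumes "eps > 0" "B > 0" "\<And>n. \<kappa>s n \<in> moment_class eps B" "\<kappa> \<in> moment_class eps B"
    "weak_conv_m \<kappa>s \<kappa>"
  shows "(\<lambda>n. \<integral>x. max 0 (x - z) \<partial>\<kappa>s n) \<longlonglongrightarrow> (\<integral>x. max 0 (x - z) \<partial>\<kappa>)"
proof (rule LIMSEQ_I)
  fix r :: real assume r: "r > 0"
  define \<delta> where "\<delta> = r / (6 * B)"
  have d: "\<delta> > 0" using r assms(2) by (simp add: \<delta>_def)
  define K0 where "K0 = 2 / (\<delta> powr (1 / eps))"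
  have K0: "K0 > 0" using d by (simp add: K0_def)
  define K where "K = max K0 (2 * \<bar>z\<bar> + 1)"
  have K: "K > 0" "2 * \<bar>z\<bar> \<le> K" "K0 \<le> K" unfolding K_def using K0 by auto
  have "(2 / K) powr eps \<le> (2 / K0) powr eps"
    using K K0 assms(1) by (intro powr_mono2 divide_left_mono) auto
  also have "2 / K0 = \<delta> powr (1 / eps)" using d by (simp add: K0_def)
  also have "(\<delta> powr (1 / eps)) powr eps = \<delta>" using d assms(1) by (simp add: powr_powr)
  finally have T: "2 * B * (2 / K) powr eps \<le> r / 3"
    using assms(2) by (simp add: \<delta>_def) (simp add: field_simps)
  have bd: "norm (min (max 0 (x - z)) K) \<le> K" for x using K by auto
  have cont: "isCont (\<lambda>x. min (max 0 (x - z)) K) x" for x by (intro continuous_intros)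
  have lim: "(\<lambda>n. \<integral>x. min (max 0 (x - z)) K \<partial>\<kappa>s n) \<longlonglongrightarrow> (\<integral>x. min (max 0 (x - z)) K \<partial>\<kappa>)"
    apply (rule weak_conv_imp_integral_bdd_continuous_conv[where B=K])
    using mc_basic(1)[OF assms(3) assms(1,2)] mc_basic(1)[OF assms(4) assms(1,2)] assms(5) cont bd by auto
  have "r / 3 > 0" using r by simp
  from LIMSEQ_D[OF lim this] obtain no where no:
    "\<And>n. n \<ge> no \<Longrightarrow> norm ((\<integral>x. min (max 0 (x - z)) K \<partial>\<kappa>s n) - (\<integral>x. min (max 0 (x - z)) K \<partial>\<kappa>)) < r / 3"
    by blast
  show "\<exists>no. \<forall>n\<ge>no. norm ((\<integral>x. max 0 (x - z) \<partial>\<kappa>s n) - (\<integral>x. max 0 (x - z) \<partial>\<kappa>)) < r"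
  proof (intro exI allI impI)
    fix n assume "n \<ge> no"
    note a = no[OF this]
    note t1 = hinge_tail[OF assms(3)[of n] assms(1,2) K(1,2)]
    note t2 = hinge_tail[OF assms(4) assms(1,2) K(1,2)]
    have "(\<integral>x. min (max 0 (x - z)) K \<partial>\<kappa>s n) - (\<integral>x. min (max 0 (x - z)) K \<partial>\<kappa>) < r / 3 \<and>
       - ((\<integral>x. min (max 0 (x - z)) K \<partial>\<kappa>s n) - (\<integral>x. min (max 0 (x - z)) K \<partial>\<kappa>)) < r / 3"
      using a unfolding real_norm_def abs_less_iff .
    note a12 = conjunct1[OF this] conjunct2[OF this]
    show "norm ((\<integral>x. max 0 (x - z) \<partial>\<kappa>s n) - (\<integral>x. max 0 (x - z) \<partial>\<kappa>)) < r"
      unfolding real_norm_def abs_less_iff using a12 t1 t2 T by (intro conjI) linarith+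
  qed
qed

lemma phi_conv:
  assumes "p < 1" "eps > 0" "B > 0" "\<And>n. \<kappa>s n \<in> moment_class eps B" "\<kappa> \<in> moment_class eps B"
    "weak_conv_m \<kappa>s \<kappa>"
  shows "(\<lambda>n. phi p (\<kappa>s n) z) \<longlonglongrightarrow> phi p \<kappa> z"
  unfolding phi_def
  using assms(1) by (intro tendsto_intros hinge_conv[OF assms(2-6)]) auto

lemma cvar_U:
  assumes "0 < p" "p < 1" "eps > 0" "B > 0" "\<And>n. \<kappa>s n \<in> moment_class eps B"
    "\<kappa> \<in> moment_class eps B" "weak_conv_m \<kappa>s \<kappa>" "vs \<longlonglongrightarrow> v"
    "\<And>n. vs n \<le> cvar p (\<kappa>s n)"
  shows "v \<le> cvar p \<kappa>"
proof -
  define q where "q = quantile_R p \<kappa>"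
  have "vs n \<le> phi p (\<kappa>s n) q" for n
  proof -
    note mb = mc_basic[OF assms(5)[of n] assms(3,4)]
    have "vs n \<le> cvar p (\<kappa>s n)" by (rule assms(9))
    also have "\<dots> = phi p (\<kappa>s n) (quantile_R p (\<kappa>s n))" by (rule cvar_phi[OF mb(1) mb(4) assms(1,2)])
    also have "\<dots> \<le> phi p (\<kappa>s n) q" by (rule phi_min[OF mb(1) mb(4) assms(1,2)])
    finally show ?thesis .
  qed
  moreover have "(\<lambda>n. phi p (\<kappa>s n) q) \<longlonglongrightarrow> phi p \<kappa> q"
    by (rule phi_conv[OF assms(2) assms(3,4,5,6,7)])
  ultimately have "v \<le> phi p \<kappa> q" using assms(8) by (intro LIMSEQ_le) auto
  also have "phi p \<kappa> q = cvar p \<kappa>"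
    using cvar_phi[OF mc_basic(1,4)[OF assms(6) assms(3,4)] assms(1,2)] q_def by simp
  finally show ?thesis .
qed

lemma cvar_L:
  assumes "0 < p" "p < 1" "eps > 0" "B > 0" "\<And>n. \<kappa>s n \<in> moment_class eps B"
    "\<kappa> \<in> moment_class eps B" "weak_conv_m \<kappa>s \<kappa>" "vs \<longlonglongrightarrow> v"
    "\<And>n. cvar p (\<kappa>s n) \<le> vs n"
  shows "cvar p \<kappa> \<le> v"
proof -
  define qs where "qs = (\<lambda>n. quantile_R p (\<kappa>s n))"
  have "bounded (range qs)"
    by (rule boundedI[where B="max 1 (B / p + B / (1 - p)) + 1"])
       (use quantile_bound[OF assms(5) assms(3,4,1,2)] in \<open>auto simp: qs_def\<close>)
  then obtain l r where r: "strict_mono r" "(qs \<circ> r) \<longlonglongrightarrow> l"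
    using bounded_imp_convergent_subsequence by blast
  define L where "L = 1 + 1 / (1 - p)"
  have "phi p (\<kappa>s (r k)) l \<le> vs (r k) + L * \<bar>l - qs (r k)\<bar>" for k
  proof -
    note mb = mc_basic[OF assms(5)[of "r k"] assms(3,4)]
    have "phi p (\<kappa>s (r k)) l \<le> phi p (\<kappa>s (r k)) (qs (r k)) + L * \<bar>l - qs (r k)\<bar>"
      unfolding L_def by (rule phi_lip[OF mb(1) mb(4) assms(1,2)])
    also have "phi p (\<kappa>s (r k)) (qs (r k)) = cvar p (\<kappa>s (r k))"
      unfolding qs_def by (rule cvar_phi[OF mb(1) mb(4) assms(1,2), symmetric])
    finally show ?thesis using assms(9)[of "r k"] by simp
  qed
  moreover have "(\<lambda>k. phi p (\<kappa>s (r k)) l) \<longlonglongrightarrow> phi p \<kappa> l"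
    using phi_conv[OF assms(2) assms(3,4) _ assms(6) weak_conv_m_subseq[OF assms(7) r(1)], of l] assms(5)
    by (simp add: comp_def)
  moreover have "(\<lambda>k. vs (r k) + L * \<bar>l - qs (r k)\<bar>) \<longlonglongrightarrow> v + L * \<bar>l - l\<bar>"
    using LIMSEQ_subseq_LIMSEQ[OF assms(8) r(1)] r(2)
    by (intro tendsto_intros) (auto simp: comp_def)
  ultimately have "phi p \<kappa> l \<le> v" by (intro LIMSEQ_le) auto
  moreover have "cvar p \<kappa> \<le> phi p \<kappa> l"
    using cvar_phi[OF mc_basic(1,4)[OF assms(6) assms(3,4)] assms(1,2)]
      phi_min[OF mc_basic(1,4)[OF assms(6) assms(3,4)] assms(1,2)] by simp
  ultimately show ?thesis by simp
qed


lemma int_bdd: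
  fixes u :: "real \<Rightarrow> real"
  assumes "real_distribution \<mu>" "u \<in> borel_measurable borel" "\<And>x. \<bar>u x\<bar> \<le> C"
  shows "integrable \<mu> u"
proof -
  interpret real_distribution \<mu> by fact
  show ?thesis
    by (rule finite_measure.integrable_const_bound[where B=C]) (use assms rd_meas in auto)
qed

lemma isCont_borel: "(\<And>x. isCont h x) \<Longrightarrow> (h :: real \<Rightarrow> real) \<in> borel_measurable borel"
  by (intro borel_measurable_continuous_onI continuous_at_imp_continuous_on) auto

definition good :: "real measure \<Rightarrow> real measure \<Rightarrow> (real \<Rightarrow> real) \<Rightarrow> bool" where
  "good \<eta> \<kappa> f \<longleftrightarrow> f \<in> borel_measurable borel \<and> (\<exists>C. \<forall>x. \<bar>f x\<bar> \<le> C) \<and>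
     (\<forall>e>0. \<exists>h. (\<forall>x. isCont h x) \<and> (\<exists>C. \<forall>x. \<bar>h x\<bar> \<le> C) \<and>
        (\<integral>x. \<bar>f x - h x\<bar> \<partial>\<eta>) < e \<and> (\<integral>x. \<bar>f x - h x\<bar> \<partial>\<kappa>) < e)"

lemma inner_approx:
  assumes rd: "real_distribution \<mu>" and A: "A \<in> sets borel" and e: "e > 0"
  shows "\<exists>K. compact K \<and> K \<subseteq> A \<and> measure \<mu> A < measure \<mu> K + e"
proof (cases "measure \<mu> A < e")
  case True
  thus ?thesis by (intro exI[of _ "{}"]) auto
next
  case False
  interpret real_distribution \<mu> by fact
  have "ennreal (measure \<mu> A - e) < ennreal (measure \<mu> A)"
    using False e by (intro ennreal_lessI) auto
  also have "ennreal (measure \<mu> A) = emeasure \<mu> A" by (simp add: emeasure_eq_measure)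
  also have "\<dots> = (SUP K \<in> {K. K \<subseteq> A \<and> compact K}. emeasure \<mu> K)"
    by (rule inner_regular[OF events_eq_borel _ A]) simp
  finally obtain K where K: "K \<subseteq> A" "compact K" "ennreal (measure \<mu> A - e) < emeasure \<mu> K"
    unfolding less_SUP_iff by blast
  have "ennreal (measure \<mu> A - e) < ennreal (measure \<mu> K)" using K(3) by (simp add: emeasure_eq_measure)
  hence "measure \<mu> A - e < measure \<mu> K" using False by (subst (asm) ennreal_less_iff) auto
  thus ?thesis using K by (intro exI[of _ K]) auto
qed

context
  fixes \<eta> \<kappa> :: "real measure"
  assumes \<eta>: "real_distribution \<eta>" and \<kappa>: "real_distribution \<kappa>"
begin

lemma good_indicator:
  assumes A: "A \<in> sets borel"
  shows "good \<eta> \<kappa> (indicator A)"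
  unfolding good_def
proof (intro conjI allI impI)
  show "indicator A \<in> borel_measurable borel" using A by simp
  show "\<exists>C. \<forall>x. \<bar>indicator A x :: real\<bar> \<le> C" by (intro exI[of _ 1]) (auto simp: indicator_def)
  fix e :: real assume e: "e > 0"
  have Ac: "- A \<in> sets borel" using A by auto
  obtain K1 where K1: "compact K1" "K1 \<subseteq> A" "measure \<eta> A < measure \<eta> K1 + e / 2"
    using inner_approx[OF \<eta> A, of "e/2"] e by auto
  obtain K2 where K2: "compact K2" "K2 \<subseteq> A" "measure \<kappa> A < measure \<kappa> K2 + e / 2"
    using inner_approx[OF \<kappa> A, of "e/2"] e by auto
  obtain L1 where L1: "compact L1" "L1 \<subseteq> - A" "measure \<eta> (- A) < measure \<eta> L1 + e / 2"
    using inner_approx[OF \<eta> Ac, of "e/2"] e by auto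
  obtain L2 where L2: "compact L2" "L2 \<subseteq> - A" "measure \<kappa> (- A) < measure \<kappa> L2 + e / 2"
    using inner_approx[OF \<kappa> Ac, of "e/2"] e by auto
  define K where "K = K1 \<union> K2"
  define L where "L = L1 \<union> L2"
  have KL: "compact K" "compact L" "K \<subseteq> A" "L \<subseteq> - A" "K \<inter> L = {}"
    using K1 K2 L1 L2 by (auto simp: K_def L_def)
  obtain h :: "real \<Rightarrow> real" where h: "continuous_on UNIV h" "\<And>x. h x \<in> closed_segment 1 0"
    "\<And>x. x \<in> K \<Longrightarrow> h x = 1" "\<And>x. x \<in> L \<Longrightarrow> h x = 0"
    using Urysohn[of K L 1 0] KL compact_imp_closed by metis
  have h01: "0 \<le> h x \<and> h x \<le> 1" for x using h(2)[of x] by (auto simp: closed_segment_eq_real_ivl)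
  show "\<exists>h. (\<forall>x. isCont h x) \<and> (\<exists>C. \<forall>x. \<bar>h x\<bar> \<le> C) \<and>
        (\<integral>x. \<bar>indicator A x - h x\<bar> \<partial>\<eta>) < e \<and> (\<integral>x. \<bar>indicator A x - h x\<bar> \<partial>\<kappa>) < e"
  proof (intro exI[of _ h] conjI)
    show "\<forall>x. isCont h x" using h(1) by (simp add: continuous_on_eq_continuous_at)
    show "\<exists>C. \<forall>x. \<bar>h x\<bar> \<le> C" using h01 by (intro exI[of _ 1]) auto
    have pt: "\<bar>indicator A x - h x\<bar> \<le> indicator (- (K \<union> L)) x" for x
      using h01[of x] h(3,4)[of x] KL by (auto simp: indicator_def)
    have hb: "h \<in> borel_measurable borel"
      using h(1) by (intro borel_measurable_continuous_onI) auto
    have bound: "(\<integral>x. \<bar>indicator A x - h x\<bar> \<partial>\<mu>) < e"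
      if rd: "real_distribution \<mu>" and c1: "measure \<mu> A < measure \<mu> K + e / 2"
        and c2: "measure \<mu> (- A) < measure \<mu> L + e / 2" for \<mu>
    proof -
      interpret real_distribution \<mu> by fact
      have Sb: "- (K \<union> L) \<in> sets borel"
        using KL by (intro borel_open open_Compl closed_Un compact_imp_closed) auto
      have i1: "integrable \<mu> (indicator (- (K \<union> L)) :: real \<Rightarrow> real)"
        by (rule int_bdd[OF rd borel_measurable_indicator[OF Sb], of 1]) (simp add: indicator_def)
      have i2: "integrable \<mu> (\<lambda>x. \<bar>indicator A x - h x\<bar>)"
        by (rule int_bdd[OF rd, of _ 1]) (use A hb h01 in \<open>auto simp: indicator_def\<close>)
      have I1: "(\<integral>x. \<bar>indicator A x - h x\<bar> \<partial>\<mu>) \<le> (\<integral>x. indicator (- (K \<union> L)) x \<partial>\<mu>)"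
        by (rule integral_mono[OF i2 i1 pt])
      have I2: "(\<integral>x. indicator (- (K \<union> L)) x \<partial>\<mu>) = measure \<mu> (- (K \<union> L))"
        using Sb by simp
      have Kb: "K \<in> sets borel" "L \<in> sets borel" "K \<union> L \<in> sets borel"
        using KL by (auto intro!: borel_closed compact_imp_closed)
      have I3: "measure \<mu> (K \<union> L) = measure \<mu> K + measure \<mu> L"
        using finite_measure_Union[of K L] Kb KL by simp
      have I4: "measure \<mu> (- (K \<union> L)) = 1 - measure \<mu> (K \<union> L)"
        using prob_compl[of "K \<union> L"] Kb by (simp add: Compl_eq_Diff_UNIV)
      have I5: "measure \<mu> (- A) = 1 - measure \<mu> A"
        using prob_compl[of A] A by (simp add: Compl_eq_Diff_UNIV)
      show ?thesis using I1 I2 I3 I4 I5 c1 c2 by linarith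
    qed
    have mK: "measure \<mu> K1 \<le> measure \<mu> K" "measure \<mu> K2 \<le> measure \<mu> K"
      "measure \<mu> L1 \<le> measure \<mu> L" "measure \<mu> L2 \<le> measure \<mu> L" if "real_distribution \<mu>" for \<mu>
    proof -
      interpret real_distribution \<mu> by fact
      show "measure \<mu> K1 \<le> measure \<mu> K" "measure \<mu> K2 \<le> measure \<mu> K"
        "measure \<mu> L1 \<le> measure \<mu> L" "measure \<mu> L2 \<le> measure \<mu> L"
        using KL K1 K2 L1 L2 compact_imp_closed
        by (auto intro!: finite_measure_mono borel_closed compact_imp_closed compact_Un simp: K_def L_def)
    qed
    show "(\<integral>x. \<bar>indicator A x - h x\<bar> \<partial>\<eta>) < e"
      using bound[OF \<eta>] K1(3) L1(3) mK[OF \<eta>] by linarith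
    show "(\<integral>x. \<bar>indicator A x - h x\<bar> \<partial>\<kappa>) < e"
      using bound[OF \<kappa>] K2(3) L2(3) mK[OF \<kappa>] by linarith
  qed
qed


lemma abs_add_bound:
  fixes a b :: "real \<Rightarrow> real"
  shows "(\<And>x. \<bar>a x\<bar> \<le> A) \<Longrightarrow> (\<And>x. \<bar>b x\<bar> \<le> B') \<Longrightarrow> \<bar>a x + b x\<bar> \<le> A + B'"
proof -
  assume "\<And>x. \<bar>a x\<bar> \<le> A" "\<And>x. \<bar>b x\<bar> \<le> B'"
  thus ?thesis using abs_triangle_ineq[of "a x" "b x"] by (smt (verit))
qed

lemma int_abs_diff:
  fixes f h :: "real \<Rightarrow> real"
  assumes "real_distribution \<mu>" "f \<in> borel_measurable borel" "h \<in> borel_measurable borel"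
    "\<And>x. \<bar>f x\<bar> \<le> Cf" "\<And>x. \<bar>h x\<bar> \<le> Ch"
  shows "integrable \<mu> (\<lambda>x. \<bar>f x - h x\<bar>)"
proof (rule int_bdd[OF assms(1), of _ "Cf + Ch"])
  have [measurable]: "f \<in> borel_measurable borel" "h \<in> borel_measurable borel" using assms(2,3) .
  show "(\<lambda>x. \<bar>f x - h x\<bar>) \<in> borel_measurable borel" by measurable
  fix x show "\<bar>\<bar>f x - h x\<bar>\<bar> \<le> Cf + Ch" using assms(4,5)[of x] by linarith
qed

lemma good_get:
  assumes "good \<eta> \<kappa> f" "e > 0"
  obtains h C where "\<And>x. isCont h x" "\<And>x. \<bar>h x\<bar> \<le> C"
    "(\<integral>x. \<bar>f x - h x\<bar> \<partial>\<eta>) < e" "(\<integral>x. \<bar>f x - h x\<bar> \<partial>\<kappa>) < e"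
  using assms unfolding good_def by blast

lemma good_bdd:
  assumes "good \<eta> \<kappa> f"
  obtains C where "f \<in> borel_measurable borel" "\<And>x. \<bar>f x\<bar> \<le> C"
  using assms unfolding good_def by blast

lemma good_zero: "good \<eta> \<kappa> (\<lambda>x. 0)"
  unfolding good_def by (auto intro!: exI[of _ "\<lambda>x. 0"])

lemma good_add:
  assumes "good \<eta> \<kappa> f" "good \<eta> \<kappa> g"
  shows "good \<eta> \<kappa> (\<lambda>x. f x + g x)"
proof -
  obtain Cf where fb: "f \<in> borel_measurable borel" "\<And>x. \<bar>f x\<bar> \<le> Cf"
    using good_bdd[OF assms(1)] by blast
  obtain Cg where gb: "g \<in> borel_measurable borel" "\<And>x. \<bar>g x\<bar> \<le> Cg"
    using good_bdd[OF assms(2)] by blast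
  have [measurable]: "f \<in> borel_measurable borel" "g \<in> borel_measurable borel" using fb(1) gb(1) .
  show ?thesis unfolding good_def
  proof (intro conjI allI impI)
    show "(\<lambda>x. f x + g x) \<in> borel_measurable borel" by measurable
    show "\<exists>C. \<forall>x. \<bar>f x + g x\<bar> \<le> C"
    proof (intro exI[of _ "Cf + Cg"] allI)
      fix x show "\<bar>f x + g x\<bar> \<le> Cf + Cg" using abs_triangle_ineq[of "f x" "g x"] fb(2)[of x] gb(2)[of x] by linarith
    qed
    fix e :: real assume e: "e > 0"
    obtain h1 C1 where h1: "\<And>x. isCont h1 x" "\<And>x. \<bar>h1 x\<bar> \<le> C1"
      "(\<integral>x. \<bar>f x - h1 x\<bar> \<partial>\<eta>) < e/2" "(\<integral>x. \<bar>f x - h1 x\<bar> \<partial>\<kappa>) < e/2"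
      using good_get[OF assms(1) half_gt_zero[OF e]] by blast
    obtain h2 C2 where h2: "\<And>x. isCont h2 x" "\<And>x. \<bar>h2 x\<bar> \<le> C2"
      "(\<integral>x. \<bar>g x - h2 x\<bar> \<partial>\<eta>) < e/2" "(\<integral>x. \<bar>g x - h2 x\<bar> \<partial>\<kappa>) < e/2"
      using good_get[OF assms(2) half_gt_zero[OF e]] by blast
    have key: "(\<integral>x. \<bar>f x + g x - (h1 x + h2 x)\<bar> \<partial>\<mu>) \<le> (\<integral>x. \<bar>f x - h1 x\<bar> \<partial>\<mu>) + (\<integral>x. \<bar>g x - h2 x\<bar> \<partial>\<mu>)"
      if rd: "real_distribution \<mu>" for \<mu>
    proof -
      have i1: "integrable \<mu> (\<lambda>x. \<bar>f x - h1 x\<bar>)"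
        by (rule int_abs_diff[OF rd fb(1) isCont_borel[OF h1(1)] fb(2) h1(2)])
      have i2: "integrable \<mu> (\<lambda>x. \<bar>g x - h2 x\<bar>)"
        by (rule int_abs_diff[OF rd gb(1) isCont_borel[OF h2(1)] gb(2) h2(2)])
      have b1: "\<bar>f x + g x\<bar> \<le> Cf + Cg" for x by (rule abs_add_bound[of f Cf g Cg, OF fb(2) gb(2)])
      have b2: "\<bar>h1 x + h2 x\<bar> \<le> C1 + C2" for x by (rule abs_add_bound[of h1 C1 h2 C2, OF h1(2) h2(2)])
      have i3: "integrable \<mu> (\<lambda>x. \<bar>(f x + g x) - (h1 x + h2 x)\<bar>)"
        by (rule int_abs_diff[OF rd borel_measurable_add[OF fb(1) gb(1)]
              borel_measurable_add[OF isCont_borel[OF h1(1)] isCont_borel[OF h2(1)]] b1 b2])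
      have "(\<integral>x. \<bar>f x + g x - (h1 x + h2 x)\<bar> \<partial>\<mu>) \<le> (\<integral>x. \<bar>f x - h1 x\<bar> + \<bar>g x - h2 x\<bar> \<partial>\<mu>)"
        by (rule integral_mono[OF i3 Bochner_Integration.integrable_add[OF i1 i2]]) linarith
      also have "\<dots> = (\<integral>x. \<bar>f x - h1 x\<bar> \<partial>\<mu>) + (\<integral>x. \<bar>g x - h2 x\<bar> \<partial>\<mu>)"
        by (rule Bochner_Integration.integral_add[OF i1 i2])
      finally show ?thesis .
    qed
    show "\<exists>h. (\<forall>x. isCont h x) \<and> (\<exists>C. \<forall>x. \<bar>h x\<bar> \<le> C) \<and>
        (\<integral>x. \<bar>f x + g x - h x\<bar> \<partial>\<eta>) < e \<and> (\<integral>x. \<bar>f x + g x - h x\<bar> \<partial>\<kappa>) < e"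
    proof (intro exI[of _ "\<lambda>x. h1 x + h2 x"] conjI allI)
      show "isCont (\<lambda>x. h1 x + h2 x) x" for x using h1(1) h2(1) by (intro continuous_intros)
      show "\<exists>C. \<forall>x. \<bar>h1 x + h2 x\<bar> \<le> C"
      proof (intro exI[of _ "C1 + C2"] allI)
        fix x show "\<bar>h1 x + h2 x\<bar> \<le> C1 + C2" using abs_triangle_ineq[of "h1 x" "h2 x"] h1(2)[of x] h2(2)[of x] by linarith
      qed
      show "(\<integral>x. \<bar>f x + g x - (h1 x + h2 x)\<bar> \<partial>\<eta>) < e" using key[OF \<eta>] h1(3) h2(3) by linarith
      show "(\<integral>x. \<bar>f x + g x - (h1 x + h2 x)\<bar> \<partial>\<kappa>) < e" using key[OF \<kappa>] h1(4) h2(4) by linarith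
    qed
  qed
qed

lemma good_scale:
  assumes "good \<eta> \<kappa> f"
  shows "good \<eta> \<kappa> (\<lambda>x. a * f x)"
proof (cases "a = 0")
  case True thus ?thesis using good_zero by simp
next
  case False
  obtain Cf where fb: "f \<in> borel_measurable borel" "\<And>x. \<bar>f x\<bar> \<le> Cf"
    using good_bdd[OF assms(1)] by blast
  have [measurable]: "f \<in> borel_measurable borel" using fb(1) .
  show ?thesis unfolding good_def
  proof (intro conjI allI impI)
    show "(\<lambda>x. a * f x) \<in> borel_measurable borel" by measurable
    show "\<exists>C. \<forall>x. \<bar>a * f x\<bar> \<le> C" using fb(2)
      by (intro exI[of _ "\<bar>a\<bar> * Cf"]) (simp add: abs_mult mult_left_mono)
    fix e :: real assume e: "e > 0"
    have e': "e / \<bar>a\<bar> > 0" using e False by simp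
    obtain h C where h: "\<And>x. isCont h x" "\<And>x. \<bar>h x\<bar> \<le> C"
      "(\<integral>x. \<bar>f x - h x\<bar> \<partial>\<eta>) < e / \<bar>a\<bar>" "(\<integral>x. \<bar>f x - h x\<bar> \<partial>\<kappa>) < e / \<bar>a\<bar>"
      using good_get[OF assms e'] by blast
    have key: "(\<integral>x. \<bar>a * f x - a * h x\<bar> \<partial>\<mu>) = \<bar>a\<bar> * (\<integral>x. \<bar>f x - h x\<bar> \<partial>\<mu>)" for \<mu>
    proof -
      have "(\<lambda>x. \<bar>a * f x - a * h x\<bar>) = (\<lambda>x. \<bar>a\<bar> * \<bar>f x - h x\<bar>)"
        by (auto simp: abs_mult[symmetric] algebra_simps)
      thus ?thesis by simp
    qed
    show "\<exists>h. (\<forall>x. isCont h x) \<and> (\<exists>C. \<forall>x. \<bar>h x\<bar> \<le> C) \<and>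
        (\<integral>x. \<bar>a * f x - h x\<bar> \<partial>\<eta>) < e \<and> (\<integral>x. \<bar>a * f x - h x\<bar> \<partial>\<kappa>) < e"
    proof (intro exI[of _ "\<lambda>x. a * h x"] conjI allI)
      show "isCont (\<lambda>x. a * h x) x" for x using h(1) by (intro continuous_intros)
      show "\<exists>C. \<forall>x. \<bar>a * h x\<bar> \<le> C" using h(2)
        by (intro exI[of _ "\<bar>a\<bar> * C"]) (simp add: abs_mult mult_left_mono)
      show "(\<integral>x. \<bar>a * f x - a * h x\<bar> \<partial>\<eta>) < e" using key h(3) False by (simp add: field_simps)
      show "(\<integral>x. \<bar>a * f x - a * h x\<bar> \<partial>\<kappa>) < e" using key h(4) False by (simp add: field_simps)
    qed
  qed
qed

lemma good_sum:
  assumes "finite J" "\<And>j. j \<in> J \<Longrightarrow> good \<eta> \<kappa> (u j)"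
  shows "good \<eta> \<kappa> (\<lambda>x. \<Sum>j\<in>J. u j x)"
  using assms
proof (induction J rule: finite_induct)
  case empty thus ?case using good_zero by simp
next
  case (insert a F)
  have "good \<eta> \<kappa> (\<lambda>x. u a x + (\<Sum>j\<in>F. u j x))"
    using insert by (intro good_add) auto
  thus ?case using insert by simp
qed

lemma good_unif:
  fixes f :: "real \<Rightarrow> real"
  assumes fb: "f \<in> borel_measurable borel" "\<And>x. \<bar>f x\<bar> \<le> Cf"
    and ap: "\<And>d. d > 0 \<Longrightarrow> \<exists>g. good \<eta> \<kappa> g \<and> (\<forall>x. \<bar>f x - g x\<bar> \<le> d)"
  shows "good \<eta> \<kappa> f"
  unfolding good_def
proof (intro conjI allI impI)
  show "f \<in> borel_measurable borel" by fact
  show "\<exists>C. \<forall>x. \<bar>f x\<bar> \<le> C" using fb(2) by blast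
  fix e :: real assume e: "e > 0"
  obtain g where g: "good \<eta> \<kappa> g" "\<And>x. \<bar>f x - g x\<bar> \<le> e / 3" using ap[of "e/3"] e by auto
  obtain Cg where gb: "g \<in> borel_measurable borel" "\<And>x. \<bar>g x\<bar> \<le> Cg"
    using good_bdd[OF g(1)] by blast
  obtain h C where h: "\<And>x. isCont h x" "\<And>x. \<bar>h x\<bar> \<le> C"
    "(\<integral>x. \<bar>g x - h x\<bar> \<partial>\<eta>) < e / 3" "(\<integral>x. \<bar>g x - h x\<bar> \<partial>\<kappa>) < e / 3"
    using good_get[OF g(1), of "e/3"] e by auto
  have key: "(\<integral>x. \<bar>f x - h x\<bar> \<partial>\<mu>) \<le> e / 3 + (\<integral>x. \<bar>g x - h x\<bar> \<partial>\<mu>)"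
    if rd: "real_distribution \<mu>" for \<mu>
  proof -
    interpret real_distribution \<mu> by fact
    have i1: "integrable \<mu> (\<lambda>x. \<bar>f x - h x\<bar>)"
      by (rule int_abs_diff[OF rd fb(1) isCont_borel[OF h(1)] fb(2) h(2)])
    have i2: "integrable \<mu> (\<lambda>x. \<bar>g x - h x\<bar>)"
      by (rule int_abs_diff[OF rd gb(1) isCont_borel[OF h(1)] gb(2) h(2)])
    have "(\<integral>x. \<bar>f x - h x\<bar> \<partial>\<mu>) \<le> (\<integral>x. e / 3 + \<bar>g x - h x\<bar> \<partial>\<mu>)"
      apply (rule integral_mono[OF i1 Bochner_Integration.integrable_add[OF integrable_const i2]])
      subgoal for x using g(2)[of x] by linarith
      done
    also have "\<dots> = e / 3 + (\<integral>x. \<bar>g x - h x\<bar> \<partial>\<mu>)"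
      using i2 prob_space by simp
    finally show ?thesis .
  qed
  show "\<exists>h. (\<forall>x. isCont h x) \<and> (\<exists>C. \<forall>x. \<bar>h x\<bar> \<le> C) \<and>
        (\<integral>x. \<bar>f x - h x\<bar> \<partial>\<eta>) < e \<and> (\<integral>x. \<bar>f x - h x\<bar> \<partial>\<kappa>) < e"
  proof (intro exI[of _ h] conjI)
    show "(\<integral>x. \<bar>f x - h x\<bar> \<partial>\<eta>) < e" using key[OF \<eta>] h(3) e by linarith
    show "(\<integral>x. \<bar>f x - h x\<bar> \<partial>\<kappa>) < e" using key[OF \<kappa>] h(4) e by linarith
  qed (use h in auto)
qed

lemma good_all:
  fixes f :: "real \<Rightarrow> real"
  assumes fb: "f \<in> borel_measurable borel" "\<And>x. \<bar>f x\<bar> \<le> M"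
  shows "good \<eta> \<kappa> f"
proof (rule good_unif[OF fb])
  fix d :: real assume d: "d > 0"
  define N where "N = \<lceil>M / d\<rceil> + 1"
  define J where "J = {-N..N}"
  define g where "g = (\<lambda>x. d * of_int \<lfloor>f x / d\<rfloor>)"
  have gsum: "g = (\<lambda>x. \<Sum>j\<in>J. (d * of_int j) * indicator {x. \<lfloor>f x / d\<rfloor> = j} x)"
  proof
    fix x
    have "\<bar>f x / d\<bar> \<le> M / d" using fb(2)[of x] d by (simp add: abs_divide divide_right_mono)
    hence r: "- (M / d) \<le> f x / d" "f x / d \<le> M / d" by linarith+
    have "M / d \<le> of_int \<lceil>M / d\<rceil>" by (rule le_of_int_ceiling)
    hence "-N \<le> \<lfloor>f x / d\<rfloor>" "\<lfloor>f x / d\<rfloor> \<le> N"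
      using r unfolding N_def by (simp_all add: le_floor_iff floor_le_iff) linarith+
    hence mem: "\<lfloor>f x / d\<rfloor> \<in> J" by (simp add: J_def)
    have "(\<Sum>j\<in>J. (d * of_int j) * indicator {x. \<lfloor>f x / d\<rfloor> = j} x)
        = (\<Sum>j\<in>J. if \<lfloor>f x / d\<rfloor> = j then d * of_int j else 0)"
      by (intro sum.cong) (auto simp: indicator_def)
    also have "\<dots> = d * of_int \<lfloor>f x / d\<rfloor>" using mem by (simp add: J_def)
    finally show "g x = (\<Sum>j\<in>J. (d * of_int j) * indicator {x. \<lfloor>f x / d\<rfloor> = j} x)"
      by (simp add: g_def)
  qed
  have "good \<eta> \<kappa> g"
    unfolding gsum
  proof (rule good_sum)
    show "finite J" by (simp add: J_def)
    fix j assume "j \<in> J"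
    have [measurable]: "f \<in> borel_measurable borel" using fb(1) .
    have "{x. \<lfloor>f x / d\<rfloor> = j} \<in> sets borel" by measurable
    thus "good \<eta> \<kappa> (\<lambda>x. d * of_int j * indicator {x. \<lfloor>f x / d\<rfloor> = j} x)"
      by (intro good_scale good_indicator)
  qed
  moreover have "\<bar>f x - g x\<bar> \<le> d" for x
  proof -
    have a: "d * of_int \<lfloor>f x / d\<rfloor> \<le> d * (f x / d)"
      using d floor_correct[of "f x / d"] by (intro mult_left_mono) auto
    have b: "d * (f x / d) < d * (of_int \<lfloor>f x / d\<rfloor> + 1)"
      using d floor_correct[of "f x / d"] by (intro mult_strict_left_mono) auto
    have c: "d * (f x / d) = f x" using d by simp
    have "d * (of_int \<lfloor>f x / d\<rfloor> + 1) = d * of_int \<lfloor>f x / d\<rfloor> + d" by (simp add: algebra_simps)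
    hence "d * of_int \<lfloor>f x / d\<rfloor> \<le> f x" "f x < d * of_int \<lfloor>f x / d\<rfloor> + d"
      using a b c by linarith+
    thus ?thesis unfolding g_def by linarith
  qed
  ultimately show "\<exists>g. good \<eta> \<kappa> g \<and> (\<forall>x. \<bar>f x - g x\<bar> \<le> d)" by blast
qed

lemma cont_approx:
  fixes f :: "real \<Rightarrow> real"
  assumes fb: "f \<in> borel_measurable borel" "\<And>x. \<bar>f x\<bar> \<le> M" and e: "e > 0"
  shows "\<exists>h. (\<forall>x. isCont h x) \<and> (\<forall>x. \<bar>h x\<bar> \<le> M) \<and>
    (\<integral>x. \<bar>f x - h x\<bar> \<partial>\<eta>) < e \<and> (\<integral>x. \<bar>f x - h x\<bar> \<partial>\<kappa>) < e"
proof -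
  obtain h C where h: "\<And>x. isCont h x" "\<And>x. \<bar>h x\<bar> \<le> C"
    "(\<integral>x. \<bar>f x - h x\<bar> \<partial>\<eta>) < e" "(\<integral>x. \<bar>f x - h x\<bar> \<partial>\<kappa>) < e"
    using good_get[OF good_all[OF fb] e] by blast
  define h' where "h' = (\<lambda>x. max (- M) (min M (h x)))"
  have hc: "isCont h' x" for x unfolding h'_def using h(1) by (intro continuous_intros)
  have hb: "\<bar>h' x\<bar> \<le> M" for x using fb(2)[of x] unfolding h'_def by auto
  have pt: "\<bar>f x - h' x\<bar> \<le> \<bar>f x - h x\<bar>" for x using fb(2)[of x] unfolding h'_def by auto
  have key: "(\<integral>x. \<bar>f x - h' x\<bar> \<partial>\<mu>) \<le> (\<integral>x. \<bar>f x - h x\<bar> \<partial>\<mu>)" if rd: "real_distribution \<mu>" for \<mu>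
    by (rule integral_mono[OF int_abs_diff[OF rd fb(1) isCont_borel[OF hc] fb(2) hb]
          int_abs_diff[OF rd fb(1) isCont_borel[OF h(1)] fb(2) h(2)] pt])
  show ?thesis using key[OF \<eta>] key[OF \<kappa>] h hc hb by (intro exI[of _ h']) auto
qed

end


definition DV :: "(real \<Rightarrow> real) \<Rightarrow> real measure \<Rightarrow> real measure \<Rightarrow> real" where
  "DV f \<eta> \<kappa> = (\<integral>x. f x \<partial>\<eta>) - ln (\<integral>x. exp (f x) \<partial>\<kappa>)"

lemma gibbs_pt:
  fixes g Z f :: real
  assumes "0 \<le> g" "0 < Z"
  shows "g * (f - ln g - ln Z) \<le> exp f / Z - g"
proof (cases "g = 0")
  case True thus ?thesis using assms by simp
next
  case False
  hence g: "g > 0" using assms by simp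
  have "ln (exp f / (g * Z)) \<le> exp f / (g * Z) - 1" using g assms by (intro ln_le_minus_one) auto
  moreover have "ln (exp f / (g * Z)) = f - ln g - ln Z" using g assms by (simp add: ln_div ln_mult)
  ultimately have "f - ln g - ln Z \<le> exp f / (g * Z) - 1" by simp
  hence "g * (f - ln g - ln Z) \<le> g * (exp f / (g * Z) - 1)" using g by (intro mult_left_mono) auto
  also have "\<dots> = exp f / Z - g" using g assms by (simp add: field_simps)
  finally show ?thesis .
qed

lemma exp_lip:
  fixes a b M :: real
  assumes "a \<le> M"
  shows "exp a - exp b \<le> exp M * \<bar>a - b\<bar>"
proof -
  have "exp a * (1 + (b - a)) \<le> exp a * exp (b - a)"
    by (intro mult_left_mono exp_ge_add_one_self) auto
  also have "exp a * exp (b - a) = exp b" by (simp add: exp_add[symmetric])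
  finally have "exp a - exp b \<le> exp a * (a - b)" by (simp add: algebra_simps)
  also have "\<dots> \<le> exp a * \<bar>a - b\<bar>" by (intro mult_left_mono) auto
  also have "\<dots> \<le> exp M * \<bar>a - b\<bar>" using assms by (intro mult_right_mono) auto
  finally show ?thesis .
qed

lemma negpart_bound:
  fixes g :: real
  assumes "0 \<le> g"
  shows "g * max 0 (- ln g) \<le> 1" "0 \<le> g * max 0 (- ln g)"
proof -
  show "0 \<le> g * max 0 (- ln g)" using assms by simp
  show "g * max 0 (- ln g) \<le> 1"
  proof (cases "g < 1 \<and> g > 0")
    case True
    have "ln (1 / g) \<le> 1 / g - 1" using True by (intro ln_le_minus_one) auto
    hence "- ln g \<le> 1 / g - 1" using True by (simp add: ln_div)
    hence "g * (- ln g) \<le> g * (1 / g - 1)" using True by (intro mult_left_mono) auto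
    also have "\<dots> = 1 - g" using True by (simp add: field_simps)
    finally show ?thesis using True by (simp add: max_def)
  next
    case False
    hence "g = 0 \<or> g \<ge> 1" using assms by auto
    thus ?thesis by auto
  qed
qed

lemma Z_pos:
  fixes f :: "real \<Rightarrow> real"
  assumes rd: "real_distribution \<kappa>" and fb: "f \<in> borel_measurable borel" "\<And>x. \<bar>f x\<bar> \<le> M"
  shows "integrable \<kappa> (\<lambda>x. exp (f x))" "exp (- M) \<le> (\<integral>x. exp (f x) \<partial>\<kappa>)"
    "0 < (\<integral>x. exp (f x) \<partial>\<kappa>)"
proof -
  interpret real_distribution \<kappa> by fact
  have [measurable]: "f \<in> borel_measurable borel" by (rule fb(1))
  have em: "(\<lambda>x. exp (f x)) \<in> borel_measurable borel" by measurable
  have eb: "\<bar>exp (f x)\<bar> \<le> exp M" for x using fb(2)[of x] by (simp add: abs_le_iff)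
  show i: "integrable \<kappa> (\<lambda>x. exp (f x))"
    by (rule int_bdd[OF rd em eb])
  have "(\<integral>x. exp (- M) \<partial>\<kappa>) \<le> (\<integral>x. exp (f x) \<partial>\<kappa>)"
    apply (rule integral_mono[OF integrable_const i])
    subgoal for x using fb(2)[of x] unfolding abs_le_iff by simp
    done
  thus "exp (- M) \<le> (\<integral>x. exp (f x) \<partial>\<kappa>)" using prob_space by simp
  thus "0 < (\<integral>x. exp (f x) \<partial>\<kappa>)" using exp_gt_zero[of "-M"] by linarith
qed

lemma rn_setup:
  assumes \<eta>: "real_distribution \<eta>" and \<kappa>: "real_distribution \<kappa>" and ac: "absolutely_continuous \<kappa> \<eta>"
  defines "g \<equiv> (\<lambda>x. enn2real (RN_deriv \<kappa> \<eta> x))"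
  shows "g \<in> borel_measurable borel" "\<And>x. 0 \<le> g x" "\<eta> = density \<kappa> (\<lambda>x. ennreal (g x))"
proof -
  interpret K: real_distribution \<kappa> by fact
  interpret E: real_distribution \<eta> by fact
  have sK: "sets \<kappa> = sets borel" by (rule K.events_eq_borel)
  have sE: "sets \<eta> = sets \<kappa>" using E.events_eq_borel sK by simp
  have Rm: "RN_deriv \<kappa> \<eta> \<in> borel_measurable borel"
    using borel_measurable_RN_deriv[of \<kappa> \<eta>] measurable_cong_sets[OF sK refl] by simp
  have [measurable]: "RN_deriv \<kappa> \<eta> \<in> borel_measurable borel" by (rule Rm)
  show gm: "g \<in> borel_measurable borel" unfolding g_def by measurable
  show "\<And>x. 0 \<le> g x" unfolding g_def by simp
  have "\<eta> = density \<kappa> (RN_deriv \<kappa> \<eta>)"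
    using K.density_RN_deriv[OF ac sE] by simp
  also have "\<dots> = density \<kappa> (\<lambda>x. ennreal (g x))"
  proof (rule density_cong)
    show "RN_deriv \<kappa> \<eta> \<in> borel_measurable \<kappa>" by (rule borel_measurable_RN_deriv)
    show "(\<lambda>x. ennreal (g x)) \<in> borel_measurable \<kappa>" using gm by (intro rd_meas[OF \<kappa>]) measurable
    have "AE x in \<kappa>. RN_deriv \<kappa> \<eta> x \<noteq> \<infinity>"
      by (rule K.RN_deriv_finite[OF _ ac sE]) unfold_locales
    thus "AE x in \<kappa>. RN_deriv \<kappa> \<eta> x = ennreal (g x)"
      by eventually_elim (auto simp: g_def ennreal_enn2real_if)
  qed
  finally show "\<eta> = density \<kappa> (\<lambda>x. ennreal (g x))" .
qed

lemma density_transfer: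
  fixes u g :: "real \<Rightarrow> real"
  assumes \<kappa>: "real_distribution \<kappa>" and gm: "g \<in> borel_measurable borel" "\<And>x. 0 \<le> g x"
    and eq: "\<eta> = density \<kappa> (\<lambda>x. ennreal (g x))" and um: "u \<in> borel_measurable borel"
  shows "integrable \<eta> u \<longleftrightarrow> integrable \<kappa> (\<lambda>x. g x * u x)"
    "(\<integral>x. u x \<partial>\<eta>) = (\<integral>x. g x * u x \<partial>\<kappa>)"
proof -
  have a: "u \<in> borel_measurable \<kappa>" "g \<in> borel_measurable \<kappa>" using um gm rd_meas[OF \<kappa>] by auto
  show "integrable \<eta> u \<longleftrightarrow> integrable \<kappa> (\<lambda>x. g x * u x)"
    unfolding eq using integrable_density[OF a] gm(2) by simp
  show "(\<integral>x. u x \<partial>\<eta>) = (\<integral>x. g x * u x \<partial>\<kappa>)"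
    unfolding eq using integral_density[OF a] gm(2) by simp
qed

lemma gibbs:
  fixes f :: "real \<Rightarrow> real"
  assumes \<eta>: "real_distribution \<eta>" and \<kappa>: "real_distribution \<kappa>"
    and fb: "f \<in> borel_measurable borel" "\<And>x. \<bar>f x\<bar> \<le> M"
  shows "ereal (DV f \<eta> \<kappa>) \<le> KL \<eta> \<kappa>"
proof (cases "absolutely_continuous \<kappa> \<eta> \<and> integrable \<eta> (\<lambda>x. ln (enn2real (RN_deriv \<kappa> \<eta> x)))")
  case False
  hence "KL \<eta> \<kappa> = \<infinity>" unfolding KL_def by (rule if_not_P)
  thus ?thesis by simp
next
  case True
  interpret K: real_distribution \<kappa> by fact
  interpret E: real_distribution \<eta> by fact
  define g where "g = (\<lambda>x. enn2real (RN_deriv \<kappa> \<eta> x))"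
  have rs1: "g \<in> borel_measurable borel" unfolding g_def by (rule rn_setup(1)[OF \<eta> \<kappa> conjunct1[OF True]])
  have rs2: "\<And>x. 0 \<le> g x" unfolding g_def by (rule rn_setup(2)[OF \<eta> \<kappa> conjunct1[OF True]])
  have rs3: "\<eta> = density \<kappa> (\<lambda>x. ennreal (g x))" unfolding g_def by (rule rn_setup(3)[OF \<eta> \<kappa> conjunct1[OF True]])
  note rs = rs1 rs2 rs3
  have [measurable]: "g \<in> borel_measurable borel" by (rule rs(1))
  have il: "integrable \<eta> (\<lambda>x. ln (g x))" using True by (simp add: g_def)
  have KLe: "KL \<eta> \<kappa> = ereal (\<integral>x. ln (g x) \<partial>\<eta>)" using True by (simp add: KL_def g_def)
  define Z where "Z = (\<integral>x. exp (f x) \<partial>\<kappa>)"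
  note zp = Z_pos[OF \<kappa> fb, folded Z_def]
  define u where "u = (\<lambda>x. f x - ln (g x) - ln Z)"
  have [measurable]: "f \<in> borel_measurable borel" by (rule fb(1))
  have um: "u \<in> borel_measurable borel" unfolding u_def by measurable
  have fi: "integrable \<eta> f" by (rule int_bdd[OF \<eta> fb])
  have ui: "integrable \<eta> u"
    unfolding u_def using fi il by (intro Bochner_Integration.integrable_diff integrable_const) auto
  have ui2: "integrable \<kappa> (\<lambda>x. g x * u x)"
    using ui density_transfer(1)[OF \<kappa> rs(1,2,3) um] by simp
  have gi: "integrable \<kappa> (\<lambda>x. g x * 1)"
    using density_transfer(1)[OF \<kappa> rs(1,2,3), of "\<lambda>x. 1"] E.integrable_const by simp
  have g1: "(\<integral>x. g x \<partial>\<kappa>) = 1"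
    using density_transfer(2)[OF \<kappa> rs(1,2,3), of "\<lambda>x. 1"] E.prob_space by simp
  have "(\<integral>x. u x \<partial>\<eta>) = (\<integral>x. g x * u x \<partial>\<kappa>)" by (rule density_transfer(2)[OF \<kappa> rs(1,2,3) um])
  also have "\<dots> \<le> (\<integral>x. exp (f x) / Z - g x \<partial>\<kappa>)"
    apply (rule integral_mono[OF ui2])
     apply (intro Bochner_Integration.integrable_diff integrable_divide zp(1))
    using gi apply simp
    unfolding u_def using gibbs_pt[OF rs(2) zp(3)] by blast
  also have "\<dots> = Z / Z - 1"
    using zp(1) gi g1 by (simp add: Bochner_Integration.integral_diff Z_def)
  also have "\<dots> = 0" using zp(3) by simp
  finally have "(\<integral>x. u x \<partial>\<eta>) \<le> 0" .
  moreover have "(\<integral>x. u x \<partial>\<eta>) = (\<integral>x. f x \<partial>\<eta>) - (\<integral>x. ln (g x) \<partial>\<eta>) - ln Z"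
    unfolding u_def using fi il E.prob_space
    by (simp add: Bochner_Integration.integral_diff Bochner_Integration.integrable_diff)
  ultimately have "DV f \<eta> \<kappa> \<le> (\<integral>x. ln (g x) \<partial>\<eta>)" unfolding DV_def Z_def by simp
  thus ?thesis using KLe by simp
qed

lemma dv_pert:
  fixes f h :: "real \<Rightarrow> real"
  assumes \<eta>: "real_distribution \<eta>" and \<kappa>: "real_distribution \<kappa>"
    and fb: "f \<in> borel_measurable borel" "\<And>x. \<bar>f x\<bar> \<le> M"
    and hb: "h \<in> borel_measurable borel" "\<And>x. \<bar>h x\<bar> \<le> M"
  shows "DV f \<eta> \<kappa> - DV h \<eta> \<kappa> \<le> (\<integral>x. \<bar>f x - h x\<bar> \<partial>\<eta>) + exp (2 * M) * (\<integral>x. \<bar>f x - h x\<bar> \<partial>\<kappa>)"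
proof -
  interpret K: real_distribution \<kappa> by fact
  interpret E: real_distribution \<eta> by fact
  have fi: "integrable \<eta> f" by (rule int_bdd[OF \<eta> fb])
  have hi: "integrable \<eta> h" by (rule int_bdd[OF \<eta> hb])
  have di: "integrable \<mu> (\<lambda>x. \<bar>f x - h x\<bar>)" if "real_distribution \<mu>" for \<mu>
    by (rule int_abs_diff[OF \<eta> \<kappa> that fb(1) hb(1) fb(2) hb(2)])
  have A: "(\<integral>x. f x \<partial>\<eta>) - (\<integral>x. h x \<partial>\<eta>) \<le> (\<integral>x. \<bar>f x - h x\<bar> \<partial>\<eta>)"
  proof -
    have "(\<integral>x. f x \<partial>\<eta>) - (\<integral>x. h x \<partial>\<eta>) = (\<integral>x. f x - h x \<partial>\<eta>)"
      using fi hi by (simp add: Bochner_Integration.integral_diff)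
    also have "\<dots> \<le> (\<integral>x. \<bar>f x - h x\<bar> \<partial>\<eta>)"
      by (rule integral_mono[OF Bochner_Integration.integrable_diff[OF fi hi] di[OF \<eta>]]) auto
    finally show ?thesis .
  qed
  define Zf where "Zf = (\<integral>x. exp (f x) \<partial>\<kappa>)"
  define Zh where "Zh = (\<integral>x. exp (h x) \<partial>\<kappa>)"
  note zf = Z_pos[OF \<kappa> fb, folded Zf_def]
  note zh = Z_pos[OF \<kappa> hb, folded Zh_def]
  have B: "Zh - Zf \<le> exp M * (\<integral>x. \<bar>f x - h x\<bar> \<partial>\<kappa>)"
  proof -
    have "Zh - Zf = (\<integral>x. exp (h x) - exp (f x) \<partial>\<kappa>)"
      using zf(1) zh(1) by (simp add: Bochner_Integration.integral_diff Zf_def Zh_def)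
    also have "\<dots> \<le> (\<integral>x. exp M * \<bar>f x - h x\<bar> \<partial>\<kappa>)"
      apply (rule integral_mono[OF Bochner_Integration.integrable_diff[OF zh(1) zf(1)]])
      using di[OF \<kappa>] apply simp
      subgoal for x using exp_lip[of "h x" M "f x"] hb(2)[of x] by (simp add: abs_minus_commute abs_le_iff)
      done
    also have "\<dots> = exp M * (\<integral>x. \<bar>f x - h x\<bar> \<partial>\<kappa>)" by simp
    finally show ?thesis .
  qed
  define I where "I = (\<integral>x. \<bar>f x - h x\<bar> \<partial>\<kappa>)"
  have I0: "0 \<le> I" unfolding I_def by (rule integral_nonneg_AE) simp
  have em: "exp M * exp M = exp (2 * M)"
    using exp_add[of M M] by (simp only: mult_2)
  have C: "ln Zh - ln Zf \<le> exp (2 * M) * I"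
  proof -
    have c1: "ln Zh - ln Zf = ln (Zh / Zf)" using zf(3) zh(3) by (simp add: ln_div)
    have c2: "ln (Zh / Zf) \<le> Zh / Zf - 1" using zf(3) zh(3) by (intro ln_le_minus_one) simp
    have c3: "Zh / Zf - 1 = (Zh - Zf) * (1 / Zf)" using zf(3) by (simp add: field_simps)
    have iz: "1 / Zf \<le> exp M"
    proof -
      have e1: "exp M * exp (- M) = 1" by (rule exp_minus_inverse)
      have "exp M * exp (- M) \<le> exp M * Zf" using zf(2) by (intro mult_left_mono) auto
      hence e2: "1 \<le> exp M * Zf" using e1 by simp
      show ?thesis using zf(3) e2 by (simp add: divide_le_eq)
    qed
    have c4: "(Zh - Zf) * (1 / Zf) \<le> exp M * (exp M * I)"
    proof (cases "Zh - Zf \<le> 0")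
      case True
      have "(Zh - Zf) * (1 / Zf) \<le> 0" using True zf(3) by (intro mult_nonpos_nonneg) auto
      moreover have "0 \<le> exp M * (exp M * I)" using I0 by simp
      ultimately show ?thesis by linarith
    next
      case False
      have "(Zh - Zf) * (1 / Zf) \<le> (Zh - Zf) * exp M" using False iz by (intro mult_left_mono) auto
      also have "\<dots> \<le> (exp M * I) * exp M" using B False by (intro mult_right_mono) (auto simp: I_def)
      also have "\<dots> = exp M * (exp M * I)" by (simp only: mult.commute mult.left_commute)
      finally show ?thesis .
    qed
    have "exp M * (exp M * I) = exp (2 * M) * I" using em by (simp only: mult.assoc[symmetric])
    thus ?thesis using c1 c2 c3 c4 by linarith
  qed
  show ?thesis unfolding DV_def using A C by (simp add: Zf_def Zh_def I_def)
qed


lemma exp_neg_nat_lim: "(\<lambda>n::nat. exp (- real n)) \<longlonglongrightarrow> 0"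
proof -
  have "filterlim (\<lambda>n::nat. - real n) at_bot sequentially"
    by (subst filterlim_uminus_at_bot) (simp add: filterlim_real_sequentially)
  from filterlim_compose[OF exp_at_bot this] show ?thesis .
qed

lemma clip_pt: "(0::real) \<le> N \<Longrightarrow> min N (max 0 t) - max 0 (- t) \<le> max (- N) (min N t)"
  by (auto simp: max_def min_def)

lemma dv_exists:
  assumes \<eta>: "real_distribution \<eta>" and \<kappa>: "real_distribution \<kappa>" and c: "ereal c < KL \<eta> \<kappa>"
  shows "\<exists>f M. f \<in> borel_measurable borel \<and> (\<forall>x. \<bar>f x\<bar> \<le> M) \<and> c < DV f \<eta> \<kappa>"
proof (cases "absolutely_continuous \<kappa> \<eta>")
  case False
  interpret K: real_distribution \<kappa> by fact
  interpret E: real_distribution \<eta> by fact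
  from False obtain A where A: "A \<in> null_sets \<kappa>" "A \<notin> null_sets \<eta>"
    unfolding absolutely_continuous_def by auto
  have Ab: "A \<in> sets borel" using A(1) K.events_eq_borel by (auto simp: null_sets_def)
  have "emeasure \<eta> A \<noteq> 0" using A(2) Ab E.events_eq_borel by (auto simp: null_sets_def)
  hence mA: "measure \<eta> A > 0"
    using E.emeasure_eq_measure[of A] by (simp add: zero_less_measure_iff)
  define T where "T = (\<bar>c\<bar> + 1) / measure \<eta> A"
  have T: "T > 0" using mA by (simp add: T_def)
  define f where "f = (\<lambda>x. T * indicator A x :: real)"
  have fm: "f \<in> borel_measurable borel" unfolding f_def using Ab by measurable
  have fb: "\<forall>x. \<bar>f x\<bar> \<le> T" using T by (auto simp: f_def indicator_def)
  have i1: "(\<integral>x. f x \<partial>\<eta>) = \<bar>c\<bar> + 1"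
    unfolding f_def using mA Ab E.events_eq_borel by (simp add: T_def)
  have "(\<integral>x. exp (f x) \<partial>\<kappa>) = (\<integral>x. 1 \<partial>\<kappa>)"
  proof (rule integral_cong_AE)
    show "(\<lambda>x. exp (f x)) \<in> borel_measurable \<kappa>" using fm by (intro rd_meas[OF \<kappa>]) measurable
    show "(\<lambda>x. 1::real) \<in> borel_measurable \<kappa>" by simp
    show "AE x in \<kappa>. exp (f x) = 1"
      using AE_not_in[OF A(1)] by eventually_elim (simp add: f_def)
  qed
  hence i2: "(\<integral>x. exp (f x) \<partial>\<kappa>) = 1" using K.prob_space by simp
  have "c < DV f \<eta> \<kappa>" unfolding DV_def i1 i2 by simp
  thus ?thesis using fm fb by blast
next
  case True
  note ac = True
  interpret K: real_distribution \<kappa> by fact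
  interpret E: real_distribution \<eta> by fact
  define g where "g = (\<lambda>x. enn2real (RN_deriv \<kappa> \<eta> x))"
  have rs1: "g \<in> borel_measurable borel" unfolding g_def by (rule rn_setup(1)[OF \<eta> \<kappa> True])
  have rs2: "\<And>x. 0 \<le> g x" unfolding g_def by (rule rn_setup(2)[OF \<eta> \<kappa> True])
  have rs3: "\<eta> = density \<kappa> (\<lambda>x. ennreal (g x))" unfolding g_def by (rule rn_setup(3)[OF \<eta> \<kappa> True])
  note rs = rs1 rs2 rs3
  have [measurable]: "g \<in> borel_measurable borel" by (rule rs1)
  have gi: "integrable \<kappa> (\<lambda>x. g x * 1)"
    using density_transfer(1)[OF \<kappa> rs, of "\<lambda>x. 1"] E.integrable_const by simp
  have g1: "(\<integral>x. g x \<partial>\<kappa>) = 1"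
    using density_transfer(2)[OF \<kappa> rs, of "\<lambda>x. 1"] E.prob_space by simp
  have gpos: "AE x in \<eta>. 0 < g x"
  proof -
    have "AE x in density \<kappa> (\<lambda>x. ennreal (g x)). 0 < g x"
      by (subst AE_density) (auto intro!: rd_meas[OF \<kappa>])
    thus ?thesis by (subst rs3, assumption)
  qed
  define Nn where "Nn = (\<integral>x. max 0 (- ln (g x)) \<partial>\<eta>)"
  have nm: "(\<lambda>x. max 0 (- ln (g x))) \<in> borel_measurable borel" by measurable
  have ni: "integrable \<eta> (\<lambda>x. max 0 (- ln (g x)))"
  proof -
    have "integrable \<kappa> (\<lambda>x. g x * max 0 (- ln (g x)))"
      apply (rule int_bdd[OF \<kappa> _, of _ 1])
       apply measurable
      using negpart_bound[OF rs2] by (simp add: abs_le_iff)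
    thus ?thesis using density_transfer(1)[OF \<kappa> rs nm] by simp
  qed
  define S where "S = (\<lambda>N::nat. \<integral>x. min (real N) (max 0 (ln (g x))) \<partial>\<eta>)"
  have Sm: "(\<lambda>x. min (real N) (max 0 (ln (g x)))) \<in> borel_measurable borel" for N by measurable
  have Si: "integrable \<eta> (\<lambda>x. min (real N) (max 0 (ln (g x))))" for N
    by (rule int_bdd[OF \<eta> Sm, of _ "real N"]) auto
  define fN where "fN = (\<lambda>(N::nat) x. if g x = 0 then - real N else max (- real N) (min (real N) (ln (g x))))"
  have fNm: "fN N \<in> borel_measurable borel" for N unfolding fN_def by measurable
  have fNb: "\<bar>fN N x\<bar> \<le> real N" for N x unfolding fN_def by auto
  have key: "S N - Nn - exp (- real N) \<le> DV (fN N) \<eta> \<kappa>" for N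
  proof -
    have fi: "integrable \<eta> (fN N)" by (rule int_bdd[OF \<eta> fNm fNb])
    have a: "S N - Nn \<le> (\<integral>x. fN N x \<partial>\<eta>)"
    proof -
      have "S N - Nn = (\<integral>x. min (real N) (max 0 (ln (g x))) - max 0 (- ln (g x)) \<partial>\<eta>)"
        unfolding S_def Nn_def using Si ni by (simp add: Bochner_Integration.integral_diff)
      also have "\<dots> \<le> (\<integral>x. fN N x \<partial>\<eta>)"
      proof (rule integral_mono_AE[OF Bochner_Integration.integrable_diff[OF Si ni] fi])
        show "AE x in \<eta>. min (real N) (max 0 (ln (g x))) - max 0 (- ln (g x)) \<le> fN N x"
          using gpos by eventually_elim (use clip_pt[of "real N"] in \<open>auto simp: fN_def\<close>)
      qed
      finally show ?thesis .
    qed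
    define Z where "Z = (\<integral>x. exp (fN N x) \<partial>\<kappa>)"
    note zp = Z_pos[OF \<kappa> fNm[of N] fNb[of N], folded Z_def]
    have zb: "Z \<le> 1 + exp (- real N)"
    proof -
      have pt: "exp (fN N x) \<le> g x * 1 + exp (- real N)" for x
      proof (cases "g x = 0")
        case True thus ?thesis by (simp add: fN_def)
      next
        case False
        hence gp: "g x > 0" using rs2[of x] by simp
        show ?thesis
        proof (cases "- real N \<le> min (real N) (ln (g x))")
          case True
          hence "exp (fN N x) = exp (min (real N) (ln (g x)))" using False by (simp add: fN_def)
          also have "\<dots> \<le> exp (ln (g x))" by simp
          also have "\<dots> = g x" using gp by simp
          finally have "exp (fN N x) \<le> g x" .
          moreover have "0 < exp (- real N)" by simp
          ultimately show ?thesis unfolding mult_1_right by linarith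
        next
          case c2: False
          hence "exp (fN N x) = exp (- real N)" using False by (simp add: fN_def)
          thus ?thesis using rs2[of x] by simp
        qed
      qed
      have "Z \<le> (\<integral>x. g x * 1 + exp (- real N) \<partial>\<kappa>)"
        unfolding Z_def by (rule integral_mono[OF zp(1) Bochner_Integration.integrable_add[OF gi K.integrable_const] pt])
      also have "\<dots> = 1 + exp (- real N)" using gi g1 K.prob_space by simp
      finally show ?thesis .
    qed
    have "ln Z \<le> ln (1 + exp (- real N))" using zp(3) zb by simp
    also have "\<dots> \<le> exp (- real N)" by (rule ln_add_one_self_le_self) simp
    finally have "ln Z \<le> exp (- real N)" .
    thus ?thesis using a unfolding DV_def Z_def by linarith
  qed
  have Smono: "incseq S"
  proof (rule incseq_SucI)
    fix n show "S n \<le> S (Suc n)"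
      unfolding S_def by (rule integral_mono[OF Si Si]) auto
  qed
  show ?thesis
  proof (cases "bdd_above (range S)")
    case False
    then obtain N where N: "S N > c + Nn + 1"
      unfolding bdd_above_def by (auto simp: not_le)
    have "exp (- real N) \<le> 1" by simp
    hence "c < DV (fN N) \<eta> \<kappa>" using key[of N] N by linarith
    thus ?thesis using fNm fNb by blast
  next
    case True
    define L where "L = Sup (range S)"
    have SL: "S \<longlonglongrightarrow> L" unfolding L_def by (rule LIMSEQ_incseq_SUP[OF True Smono])
    have um: "(\<lambda>x. max 0 (ln (g x))) \<in> borel_measurable \<eta>" by (intro rd_meas[OF \<eta>]) measurable
    have conv: "AE x in \<eta>. (\<lambda>i. min (real i) (max 0 (ln (g x)))) \<longlonglongrightarrow> max 0 (ln (g x))"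
    proof (rule AE_I2, rule tendsto_eventually)
      fix x
      obtain N :: nat where "max 0 (ln (g x)) \<le> real N" using real_arch_simple by blast
      hence "\<forall>n\<ge>N. min (real n) (max 0 (ln (g x))) = max 0 (ln (g x))" by auto
      thus "\<forall>\<^sub>F n in sequentially. min (real n) (max 0 (ln (g x))) = max 0 (ln (g x))"
        unfolding eventually_sequentially by blast
    qed
    have incx: "AE x in \<eta>. incseq (\<lambda>n. min (real n) (max 0 (ln (g x))))"
      by (rule AE_I2) (auto simp: incseq_def intro: min.mono)
    have SL': "(\<lambda>i. \<integral>x. min (real i) (max 0 (ln (g x))) \<partial>\<eta>) \<longlonglongrightarrow> L" using SL by (simp add: S_def)
    have hb: "has_bochner_integral \<eta> (\<lambda>x. max 0 (ln (g x))) L"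
      by (rule has_bochner_integral_monotone_convergence[OF Si incx conv SL' um])
    have ui: "integrable \<eta> (\<lambda>x. max 0 (ln (g x)))"
      using hb by (simp add: has_bochner_integral_iff)
    have uL: "(\<integral>x. max 0 (ln (g x)) \<partial>\<eta>) = L"
      using hb by (simp add: has_bochner_integral_iff)
    have lneq: "(\<lambda>x. ln (g x)) = (\<lambda>x. max 0 (ln (g x)) - max 0 (- ln (g x)))" by (auto simp: fun_eq_iff max_def)
    have li: "integrable \<eta> (\<lambda>x. ln (g x))"
      unfolding lneq by (rule Bochner_Integration.integrable_diff[OF ui ni])
    have lv: "(\<integral>x. ln (g x) \<partial>\<eta>) = L - Nn"
      unfolding lneq Nn_def using ui ni uL by (simp add: Bochner_Integration.integral_diff)
    have "KL \<eta> \<kappa> = ereal (L - Nn)"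
      using ac li lv unfolding KL_def g_def by simp
    hence cL: "c < L - Nn" using c by simp
    define d where "d = L - Nn - c"
    have d: "d > 0" using cL by (simp add: d_def)
    have ev1: "\<forall>\<^sub>F n in sequentially. L - d / 2 < S n" using order_tendstoD(1)[OF SL, of "L - d/2"] d by simp
    have ev2: "\<forall>\<^sub>F n in sequentially. exp (- real n) < d / 2"
      using order_tendstoD(2)[OF exp_neg_nat_lim, of "d/2"] d by simp
    from eventually_conj[OF ev1 ev2] obtain N where N: "L - d / 2 < S N" "exp (- real N) < d / 2"
      unfolding eventually_sequentially by blast
    have "c < DV (fN N) \<eta> \<kappa>" using key[of N] N d_def by linarith
    thus ?thesis using fNm fNb by blast
  qed
qed

lemma KL_lsc:
  assumes es: "\<And>n. real_distribution (\<eta>s n)" and \<eta>: "real_distribution \<eta>"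
    and ks: "\<And>n. real_distribution (\<kappa>s n)" and \<kappa>: "real_distribution \<kappa>"
    and we: "weak_conv_m \<eta>s \<eta>" and wk: "weak_conv_m \<kappa>s \<kappa>" and le: "\<And>n. KL (\<eta>s n) (\<kappa>s n) \<le> ereal c"
  shows "KL \<eta> \<kappa> \<le> ereal c"
proof (rule ccontr)
  assume "\<not> KL \<eta> \<kappa> \<le> ereal c"
  hence "ereal c < KL \<eta> \<kappa>" by simp
  then obtain f M where f: "f \<in> borel_measurable borel" "\<And>x. \<bar>f x\<bar> \<le> M" "c < DV f \<eta> \<kappa>"
    using dv_exists[OF \<eta> \<kappa>] by blast
  define \<delta> where "\<delta> = DV f \<eta> \<kappa> - c"
  have d: "\<delta> > 0" using f(3) by (simp add: \<delta>_def)
  define e where "e = \<delta> / (2 * (1 + exp (2 * M)))"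
  have e: "e > 0" using d by (simp add: e_def add_pos_pos)
  obtain h where h: "\<And>x. isCont h x" "\<And>x. \<bar>h x\<bar> \<le> M"
    "(\<integral>x. \<bar>f x - h x\<bar> \<partial>\<eta>) < e" "(\<integral>x. \<bar>f x - h x\<bar> \<partial>\<kappa>) < e"
    using cont_approx[OF \<eta> \<kappa> f(1) f(2) e] by blast
  have hm: "h \<in> borel_measurable borel" by (rule isCont_borel[OF h(1)])
  have "DV f \<eta> \<kappa> - DV h \<eta> \<kappa> \<le> (\<integral>x. \<bar>f x - h x\<bar> \<partial>\<eta>) + exp (2 * M) * (\<integral>x. \<bar>f x - h x\<bar> \<partial>\<kappa>)"
    by (rule dv_pert[OF \<eta> \<kappa> f(1) f(2) hm h(2)])
  also have "\<dots> \<le> e + exp (2 * M) * e"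
    using h(3,4) by (intro add_mono mult_left_mono) auto
  also have "\<dots> = \<delta> / 2"
  proof -
    have pos: "1 + exp (2 * M) > 0" using exp_gt_zero[of "2 * M"] by linarith
    have "e + exp (2 * M) * e = e * (1 + exp (2 * M))" by (simp add: algebra_simps)
    also have "\<dots> = \<delta> / 2" unfolding e_def using pos by (simp add: field_simps)
    finally show ?thesis .
  qed
  finally have "DV f \<eta> \<kappa> - DV h \<eta> \<kappa> \<le> \<delta> / 2" .
  hence hc: "c < DV h \<eta> \<kappa>" using d \<delta>_def by linarith
  have l1: "(\<lambda>n. \<integral>x. h x \<partial>\<eta>s n) \<longlonglongrightarrow> (\<integral>x. h x \<partial>\<eta>)"
    apply (rule weak_conv_imp_integral_bdd_continuous_conv[where B=M])
    using es \<eta> we h by auto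
  have l2: "(\<lambda>n. \<integral>x. exp (h x) \<partial>\<kappa>s n) \<longlonglongrightarrow> (\<integral>x. exp (h x) \<partial>\<kappa>)"
    apply (rule weak_conv_imp_integral_bdd_continuous_conv[where B="exp M"])
    using ks \<kappa> wk h(1) apply (auto intro: continuous_intros)
    subgoal for x using h(2)[of x] by (simp add: abs_le_iff)
    done
  have zp: "0 < (\<integral>x. exp (h x) \<partial>\<kappa>)" by (rule Z_pos(3)[OF \<kappa> hm h(2)])
  have "(\<lambda>n. DV h (\<eta>s n) (\<kappa>s n)) \<longlonglongrightarrow> DV h \<eta> \<kappa>"
    unfolding DV_def using zp by (intro tendsto_diff l1 tendsto_ln l2) auto
  from order_tendstoD(1)[OF this hc] obtain N where "\<And>n. n \<ge> N \<Longrightarrow> c < DV h (\<eta>s n) (\<kappa>s n)"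
    unfolding eventually_sequentially by blast
  hence "c < DV h (\<eta>s N) (\<kappa>s N)" by simp
  moreover have "ereal (DV h (\<eta>s N) (\<kappa>s N)) \<le> ereal c"
    using gibbs[OF es ks hm h(2)] le[of N] order_trans by blast
  ultimately show False by simp
qed

lemma infinitely_subseq:
  assumes "\<And>k. \<exists>N>k. P N"
  shows "\<exists>s::nat\<Rightarrow>nat. strict_mono s \<and> (\<forall>k. P (s k))"
proof -
  define s where "s = rec_nat (SOME N. N > 0 \<and> P N) (\<lambda>_ m. SOME N. N > m \<and> P N)"
  have h: "\<And>m. (SOME N. N > m \<and> P N) > m \<and> P (SOME N. N > m \<and> P N)"
    by (rule someI_ex) (use assms in auto)
  have "\<forall>k. P (s k)"
  proof
    fix k show "P (s k)" by (cases k) (auto simp: s_def h)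
  qed
  moreover have "strict_mono s"
    unfolding strict_mono_Suc_iff by (auto simp: s_def h)
  ultimately show ?thesis by blast
qed

lemma generic:
  fixes R :: "real \<Rightarrow> real \<Rightarrow> bool"
  assumes "eps > 0" "B > 0"
    and clos: "\<And>\<kappa>s \<kappa> vs v. (\<forall>n. \<kappa>s n \<in> moment_class eps B) \<Longrightarrow> \<kappa> \<in> moment_class eps B \<Longrightarrow>
        weak_conv_m \<kappa>s \<kappa> \<Longrightarrow> vs \<longlonglongrightarrow> v \<Longrightarrow> (\<forall>n. R (cvar p (\<kappa>s n)) (vs n)) \<Longrightarrow> R (cvar p \<kappa>) v"
    and eta: "\<And>n. real_distribution (\<eta>s n)" "real_distribution \<eta>" "weak_conv_m \<eta>s \<eta>"
    and v: "vs \<longlonglongrightarrow> v"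
  shows "Inf {KL \<eta> \<kappa> | \<kappa>. \<kappa> \<in> moment_class eps B \<and> R (cvar p \<kappa>) v}
     \<le> liminf (\<lambda>n. Inf {KL (\<eta>s n) \<kappa> | \<kappa>. \<kappa> \<in> moment_class eps B \<and> R (cvar p \<kappa>) (vs n)})"
    (is "Inf ?S \<le> liminf ?a")
proof (rule ccontr)
  assume "\<not> ?thesis"
  hence "liminf ?a < Inf ?S" by simp
  then obtain c where c1: "liminf ?a < ereal c" and c2: "ereal c < Inf ?S"
    using ereal_dense2 by blast
  have "\<And>k::nat. \<exists>N>k. ?a N < ereal c" using liminf_upper_bound[OF c1] by blast
  then obtain s :: "nat \<Rightarrow> nat" where s: "strict_mono s" "\<And>k. ?a (s k) < ereal c"
    using infinitely_subseq[of "\<lambda>N. ?a N < ereal c"] by blast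
  have "\<forall>k. \<exists>\<kappa>. \<kappa> \<in> moment_class eps B \<and> R (cvar p \<kappa>) (vs (s k)) \<and> KL (\<eta>s (s k)) \<kappa> < ereal c"
  proof
    fix k
    from s(2)[of k] obtain x where "x \<in> {KL (\<eta>s (s k)) \<kappa> | \<kappa>. \<kappa> \<in> moment_class eps B \<and> R (cvar p \<kappa>) (vs (s k))}"
       "x < ereal c" unfolding Inf_less_iff by blast
    thus "\<exists>\<kappa>. \<kappa> \<in> moment_class eps B \<and> R (cvar p \<kappa>) (vs (s k)) \<and> KL (\<eta>s (s k)) \<kappa> < ereal c"
      by blast
  qed
  then obtain \<kappa>s where ks: "\<And>k. \<kappa>s k \<in> moment_class eps B" "\<And>k. R (cvar p (\<kappa>s k)) (vs (s k))"
    "\<And>k. KL (\<eta>s (s k)) (\<kappa>s k) < ereal c"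
    by metis
  have "tight \<kappa>s" using tight_L[OF assms(1,2) ks(1)] .
  from tight_imp_convergent_subsubsequence[OF this, of id]
  obtain r K where r: "strict_mono r" "real_distribution K" "weak_conv_m (\<kappa>s \<circ> r) K"
    by (auto simp: strict_mono_def)
  have KL: "K \<in> moment_class eps B"
    using moment_closed[OF assms(1,2) _ r(2,3)] ks(1) by auto
  have "(vs \<circ> (s \<circ> r)) \<longlonglongrightarrow> v"
    using LIMSEQ_subseq_LIMSEQ[OF v strict_mono_o[OF s(1) r(1)]] .
  hence KR: "R (cvar p K) v"
    using clos[of "\<kappa>s \<circ> r" K "vs \<circ> (s \<circ> r)" v] ks(1,2) KL r(3) by auto
  have "KL \<eta> K \<le> ereal c"
    apply (rule KL_lsc[of "\<eta>s \<circ> (s \<circ> r)" \<eta> "\<kappa>s \<circ> r" K])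
    using eta r ks(1,3) weak_conv_m_subseq[OF eta(3) strict_mono_o[OF s(1) r(1)]]
    by (auto simp: moment_class_def probs_R_iff less_imp_le)
  hence "Inf ?S \<le> ereal c"
    using KL KR by (intro Inf_lower2[of "KL \<eta> K"]) auto
  with c2 show False by simp
qed

theorem lemma8:
  fixes p eps B :: real
  assumes "0 < p" "p < 1" "eps > 0" "B > 0"
  shows "\<forall>(\<eta>s :: nat \<Rightarrow> real measure) \<eta> (vs :: nat \<Rightarrow> real) v.
           (\<forall>n. \<eta>s n \<in> probs_R) \<longrightarrow> \<eta> \<in> probs_R \<longrightarrow>
           (\<forall>n. vs n \<in> dom_D p eps B) \<longrightarrow> v \<in> dom_D p eps B \<longrightarrow>
           weak_conv_m \<eta>s \<eta> \<longrightarrow> vs \<longlonglongrightarrow> v \<longrightarrow>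
           KL_inf_U p eps B \<eta> v \<le> liminf (\<lambda>n. KL_inf_U p eps B (\<eta>s n) (vs n)) \<and>
           KL_inf_L p eps B \<eta> v \<le> liminf (\<lambda>n. KL_inf_L p eps B (\<eta>s n) (vs n))"
proof (intro allI impI conjI)
  fix \<eta>s :: "nat \<Rightarrow> real measure" and \<eta> and vs :: "nat \<Rightarrow> real" and v :: real
  assume h: "\<forall>n. \<eta>s n \<in> probs_R" "\<eta> \<in> probs_R" "weak_conv_m \<eta>s \<eta>" "vs \<longlonglongrightarrow> v"
  show "KL_inf_U p eps B \<eta> v \<le> liminf (\<lambda>n. KL_inf_U p eps B (\<eta>s n) (vs n))"
    unfolding KL_inf_U_def
    apply (rule generic[where R="\<lambda>a b. b \<le> a"])
    using assms h apply (auto simp: probs_R_iff)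
    subgoal for ks k ws w using cvar_U[OF assms, of ks k ws w] by auto
    done
  show "KL_inf_L p eps B \<eta> v \<le> liminf (\<lambda>n. KL_inf_L p eps B (\<eta>s n) (vs n))"
    unfolding KL_inf_L_def
    apply (rule generic[where R="\<lambda>a b. a \<le> b"])
    using assms h apply (auto simp: probs_R_iff)
    subgoal for ks k ws w using cvar_L[OF assms, of ks k ws w] by auto
    done
qed
end
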